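(* Let $m=rn$. There is a bijection between $\overline G_r(U,V;d)$ and the set of walks in $\widetilde W(d,2m;\vec 0)$ all of whose points lie in the region $\{x\in\mathbb Z^d: x_1\ge x_2\ge\cdots\ge x_d\}$.
   Context: Fix integers $n,r,d\ge1$, $m=rn$. $U=\{u_1\prec\cdots\prec u_n\}$, $V=\{v_1\prec\cdots\prec v_n\}$ are disjoint totally ordered sets. An $r$-regular bipartite multigraph on $(U,V)$ is a multiset of edges $uv$ in which every vertex has degree $r$. Edges $uv,u'v'$ are noncrossing if ($u\prec u'$ and $v\prec v'$) or ($u'\prec u$ and $v'\prec v$); a planar matching is a set of pairwise noncrossing edges; $L(G)$ is the maximum size of a planar matching; $G_r(U,V;d)$ is the set of $r$-regular multigraphs $G$ with $L(G)\le d$. Let $\overline U=U\times[r]$, $\overline V=V\times[r]$ (write $u^s$ for $(u,s)$), ordered lexicographically. An $r$-configuration is a bijection between $\overline U$ and $\overline V$. For $G$ an $r$-regular multigraph, its associated configuration $\overline G$: for each edge $uv$ of $G$ of multiplicity $t\ge1$, let $i$ be the number of edges $uv'$ of $G$ (with multiplicity) with $v\prec v'$, $j$ the number of edges $u'v$ with $u\prec u'$; $\overline G$ contains the pairs $(u^{i+s},v^{j+t-s+1})$, $s=1,\dots,t$. $\overline G_r(U,V;d)=\{\overline G:G\in G_r(U,V;d)\}$. Walks: $W^*(d,2m;P)$ is the set of walks in $\mathbb Z^d$ from the origin with steps $e_{a_1},\dots,e_{a_m},-e_{b_1},\dots,-e_{b_m}$ ($a_i,b_i\in[d]$) ending in $P$,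 written $a_1\cdots a_m|b_1\cdots b_m$; write $a_{u_i^s}=a_{r(i-1)+s}$, $b_{v_i^s}=b_{r(i-1)+s}$. $W'(d,2m;P)$ is the set of such walks with $a_{u^s}\ge a_{u^{s+1}}$ and $b_{v^s}\ge b_{v^{s+1}}$ for all $u\in U,v\in V$, $1\le s<r$. For $w=a_1\cdots a_m|b_1\cdots b_m\in W'(d,2m;\vec 0)$ let $\tilde w=a_1\cdots a_m|b_m b_{m-1}\cdots b_1$ (the negative steps taken in reverse order), and $\widetilde W(d,2m;\vec 0)=\{\tilde w: w\in W'(d,2m;\vec 0)\}$. A walk stays in a region if all its visited lattice points (including start and end) lie in it. *)

theory Defs
  imports Main
begin

text \<open>Vertices: U = {u_1,...,u_n} and V = {v_1,...,v_n} are represented by the indices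
  1..n (two separate copies, i.e. the first resp. second component of an edge),
  ordered by the natural order. An r-regular bipartite multigraph is given by its
  multiplicity function G u v = number of copies of edge u_u v_v.\<close>

definition regular_multigraph :: "nat \<Rightarrow> nat \<Rightarrow> (nat \<Rightarrow> nat \<Rightarrow> nat) \<Rightarrow> bool" where
  "regular_multigraph n r G \<longleftrightarrow>
     (\<forall>u v. (u \<notin> {1..n} \<or> v \<notin> {1..n}) \<longrightarrow> G u v = 0) \<and>
     (\<forall>u\<in>{1..n}. (\<Sum>v\<in>{1..n}. G u v) = r) \<and>
     (\<forall>v\<in>{1..n}. (\<Sum>u\<in>{1..n}. G u v) = r)"

definition noncrossing :: "nat \<times> nat \<Rightarrow> nat \<times> nat \<Rightarrow> bool" where
  "noncrossing e e' \<longleftrightarrow>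
     (fst e < fst e' \<and> snd e < snd e') \<or> (fst e' < fst e \<and> snd e' < snd e)"

definition planar_matching :: "(nat \<Rightarrow> nat \<Rightarrow> nat) \<Rightarrow> (nat \<times> nat) set \<Rightarrow> bool" where
  "planar_matching G M \<longleftrightarrow>
     M \<subseteq> {(u, v). G u v > 0} \<and>
     (\<forall>e\<in>M. \<forall>e'\<in>M. e \<noteq> e' \<longrightarrow> noncrossing e e')"

definition L :: "(nat \<Rightarrow> nat \<Rightarrow> nat) \<Rightarrow> nat" where
  "L G = Max {card M | M. planar_matching G M}"

definition multigraphs :: "nat \<Rightarrow> nat \<Rightarrow> nat \<Rightarrow> (nat \<Rightarrow> nat \<Rightarrow> nat) set" where
  "multigraphs n r d = {G. regular_multigraph n r G \<and> L G \<le> d}"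

text \<open>Associated configuration: a set of pairs ((u,s),(v,t)) with u^s in U x [r],
  v^t in V x [r].\<close>

definition assoc_config :: "nat \<Rightarrow> (nat \<Rightarrow> nat \<Rightarrow> nat) \<Rightarrow> ((nat \<times> nat) \<times> (nat \<times> nat)) set" where
  "assoc_config n G =
     {((u, (\<Sum>v'\<in>{v<..n}. G u v') + s), (v, (\<Sum>u'\<in>{u<..n}. G u' v) + G u v - s + 1)) | u v s.
        u \<in> {1..n} \<and> v \<in> {1..n} \<and> G u v \<ge> 1 \<and> 1 \<le> s \<and> s \<le> G u v}"

definition configs :: "nat \<Rightarrow> nat \<Rightarrow> nat \<Rightarrow> ((nat \<times> nat) \<times> (nat \<times> nat)) set set" where
  "configs n r d = assoc_config n ` multigraphs n r d"

text \<open>Walks a_1...a_m | b_1...b_m are pairs of lists (as, bs) of length m. The position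
  after k steps (0 \<le> k \<le> 2m): the first m steps are +e_{a_i}, then -e_{b_i}.\<close>

definition pos :: "nat list \<times> nat list \<Rightarrow> nat \<Rightarrow> nat \<Rightarrow> int" where
  "pos w k c = int (count_list (take k (fst w)) c)
              - int (count_list (take (k - length (fst w)) (snd w)) c)"

definition walks_star :: "nat \<Rightarrow> nat \<Rightarrow> (nat list \<times> nat list) set" where
  "walks_star d m = {(as, bs). length as = m \<and> length bs = m \<and>
       set as \<subseteq> {1..d} \<and> set bs \<subseteq> {1..d} \<and>
       (\<forall>c\<in>{1..d}. pos (as, bs) (2 * m) c = 0)}"

text \<open>W'(d, 2m; 0) with m = r n: a_{u_i^s} = as ! (r(i-1)+s-1) (0-based lists).\<close>

definition walks_prime :: "nat \<Rightarrow> nat \<Rightarrow> nat \<Rightarrow> (nat list \<times> nat list) set" where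
  "walks_prime n r d = {(as, bs) \<in> walks_star d (r * n).
       (\<forall>i\<in>{1..n}. \<forall>s. 1 \<le> s \<and> s < r \<longrightarrow>
          as ! (r * (i - 1) + s - 1) \<ge> as ! (r * (i - 1) + s) \<and>
          bs ! (r * (i - 1) + s - 1) \<ge> bs ! (r * (i - 1) + s))}"

definition walks_tilde :: "nat \<Rightarrow> nat \<Rightarrow> nat \<Rightarrow> (nat list \<times> nat list) set" where
  "walks_tilde n r d = (\<lambda>(as, bs). (as, rev bs)) ` walks_prime n r d"

definition weyl_chamber :: "nat \<Rightarrow> (nat \<Rightarrow> int) set" where
  "weyl_chamber d = {x. \<forall>c. 1 \<le> c \<and> c < d \<longrightarrow> x c \<ge> x (Suc c)}"

definition stays_in :: "(nat list \<times> nat list) \<Rightarrow> (nat \<Rightarrow> int) set \<Rightarrow> bool" where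
  "stays_in w R \<longleftrightarrow> (\<forall>k \<le> length (fst w) + length (snd w). pos w k \<in> R)"

end

theory Submission
  imports Defs "HOL-Library.Multiset"
begin

definition hstrip :: "(nat \<Rightarrow> nat) \<Rightarrow> (nat \<Rightarrow> nat) \<Rightarrow> bool" where
  "hstrip p q \<longleftrightarrow> (\<forall>k. p k \<le> q k) \<and> (\<forall>k. q (Suc k) \<le> p k)"

definition Rel :: "(nat \<Rightarrow> nat) \<Rightarrow> (nat \<Rightarrow> nat) \<Rightarrow> (nat \<Rightarrow> nat) \<Rightarrow> (nat \<Rightarrow> nat) \<Rightarrow> bool" where
  "Rel s \<rho> l c \<longleftrightarrow> c 0 = 0 \<and> (\<forall>k. l k + \<rho> k + c k = s k + c (Suc k)) \<and>
     (\<forall>k. l (Suc k) \<le> \<rho> k) \<and> (\<forall>k. 0 < c (Suc k) \<longrightarrow> l (Suc k) = \<rho> k)"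

lemma RelD:
  assumes "Rel s \<rho> l c"
  shows "c 0 = 0" "l k + \<rho> k + c k = s k + c (Suc k)" "l (Suc k) \<le> \<rho> k"
    "0 < c (Suc k) \<Longrightarrow> l (Suc k) = \<rho> k"
  using assms unfolding Rel_def by auto

lemma uniqB:
  assumes "Rel s \<rho> l c" "Rel s \<rho>' l c'"
  shows "\<rho> = \<rho>' \<and> c = c'"
proof -
  have *: "c k = c' k" for k
  proof (induction k)
    case 0
    show ?case using RelD(1)[OF assms(1)] RelD(1)[OF assms(2)] by simp
  next
    case (Suc k)
    note a = RelD(2)[OF assms(1), of k] RelD(2)[OF assms(2), of k]
      RelD(3)[OF assms(1), of k] RelD(3)[OF assms(2), of k]
      RelD(4)[OF assms(1), of k] RelD(4)[OF assms(2), of k]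
    show ?case
    proof (rule ccontr)
      assume "c (Suc k) \<noteq> c' (Suc k)"
      then consider "c (Suc k) > c' (Suc k)" | "c (Suc k) < c' (Suc k)" by linarith
      then show False
      proof cases
        case 1 with a Suc show False by linarith
      next
        case 2 with a Suc show False by linarith
      qed
    qed
  qed
  have "\<rho> k = \<rho>' k" for k
    using RelD(2)[OF assms(1), of k] RelD(2)[OF assms(2), of k] *[of k] *[of "Suc k"] by linarith
  with * show ?thesis by auto
qed

lemma Rel_const:
  assumes "Rel s \<rho> l c" "\<forall>k\<ge>t. l k = 0 \<and> \<rho> k = 0 \<and> s k = 0" "t \<le> k"
  shows "c k = c t"
  using assms(3)
proof (induction k rule: dec_induct)
  case base then show ?case by simp
next
  case (step k)
  have "l k + \<rho> k + c k = s k + c (Suc k)" using RelD(2)[OF assms(1)] by auto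
  with assms(2) step show ?case by auto
qed

lemma uniqF:
  assumes "Rel s \<rho> l c" "Rel s \<rho> l' c'"
    and "\<forall>k\<ge>K. l k = 0 \<and> l' k = 0 \<and> \<rho> k = 0 \<and> s k = 0" and "c K = c' K"
  shows "l = l' \<and> c = c'"
proof -
  have hi: "c k = c' k" if "K \<le> k" for k
    using Rel_const[OF assms(1), of K k] Rel_const[OF assms(2), of K k] assms(3,4) that by auto
  have lo: "c k = c' k" if "k \<le> K" for k
    using that
  proof (induction k rule: inc_induct)
    case base then show ?case using assms(4) .
  next
    case (step k)
    note e = RelD(2)[OF assms(1), of k] RelD(2)[OF assms(2), of k]
    show ?case
    proof (cases k)
      case 0 then show ?thesis using RelD(1)[OF assms(1)] RelD(1)[OF assms(2)] by auto
    next
      case (Suc k0)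
      have "l k \<le> \<rho> k0" "l' k \<le> \<rho> k0" "0 < c k \<Longrightarrow> l k = \<rho> k0" "0 < c' k \<Longrightarrow> l' k = \<rho> k0"
        using RelD(3,4)[OF assms(1), of k0] RelD(3,4)[OF assms(2), of k0] Suc by auto
      with e step show ?thesis by linarith
    qed
  qed
  have cc: "c k = c' k" for k using hi lo by (metis le_cases)
  have "l k = l' k" for k
    using RelD(2)[OF assms(1), of k] RelD(2)[OF assms(2), of k] cc[of k] cc[of "Suc k"] by linarith
  with cc show ?thesis by auto
qed

fun bc :: "(nat \<Rightarrow> nat) \<Rightarrow> (nat \<Rightarrow> nat) \<Rightarrow> nat \<Rightarrow> nat" where
  "bc s l 0 = 0"
| "bc s l (Suc k) = nat (max (int (s k) - int (l k) - int (bc s l k)) (int (l (Suc k)))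
       - (int (s k) - int (l k) - int (bc s l k)))"

definition brho :: "(nat \<Rightarrow> nat) \<Rightarrow> (nat \<Rightarrow> nat) \<Rightarrow> nat \<Rightarrow> nat" where
  "brho s l k = nat (max (int (s k) - int (l k) - int (bc s l k)) (int (l (Suc k))))"

lemma Rel_bwd: "Rel s (brho s l) l (bc s l)"
  unfolding Rel_def brho_def by auto

fun fcr :: "nat \<Rightarrow> (nat \<Rightarrow> nat) \<Rightarrow> (nat \<Rightarrow> nat) \<Rightarrow> nat \<Rightarrow> nat \<Rightarrow> nat" where
  "fcr K s \<rho> x 0 = x"
| "fcr K s \<rho> x (Suc t) = (let k = K - Suc t; w = s k - \<rho> k + fcr K s \<rho> x t in
      if k = 0 then 0 else w - min w (\<rho> (k - 1)))"

definition fc :: "nat \<Rightarrow> (nat \<Rightarrow> nat) \<Rightarrow> (nat \<Rightarrow> nat) \<Rightarrow> nat \<Rightarrow> nat \<Rightarrow> nat" where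
  "fc K s \<rho> x k = (if K \<le> k then x else fcr K s \<rho> x (K - k))"

definition fl :: "nat \<Rightarrow> (nat \<Rightarrow> nat) \<Rightarrow> (nat \<Rightarrow> nat) \<Rightarrow> nat \<Rightarrow> nat \<Rightarrow> nat" where
  "fl K s \<rho> x k = s k - \<rho> k + fc K s \<rho> x (Suc k) - fc K s \<rho> x k"

lemma fc_step:
  assumes "k < K"
  shows "fc K s \<rho> x k = (let w = s k - \<rho> k + fc K s \<rho> x (Suc k) in
      if k = 0 then 0 else w - min w (\<rho> (k - 1)))"
proof -
  obtain t where t: "K - k = Suc t" using assms by (metis Suc_diff_Suc)
  have kk: "K - Suc t = k" using t assms by simp
  have "fcr K s \<rho> x t = fc K s \<rho> x (Suc k)"
  proof (cases "Suc k = K")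
    case True then have "t = 0" using t by simp
    then show ?thesis using True unfolding fc_def by simp
  next
    case False then have "K - Suc k = t" using t by simp
    then show ?thesis using False assms unfolding fc_def by simp
  qed
  then show ?thesis using assms t kk unfolding fc_def by (simp add: Let_def)
qed

lemma Rel_fwd:
  assumes K: "1 \<le> K" and rs: "\<forall>k. \<rho> k \<le> s k" and sK: "\<forall>k\<ge>K. s k = 0"
    and rK: "\<forall>k. K - 1 \<le> k \<longrightarrow> \<rho> k = 0"
  shows "Rel s \<rho> (fl K s \<rho> x) (fc K s \<rho> x)" "fc K s \<rho> x K = x" "\<forall>k\<ge>K. fl K s \<rho> x k = 0"
proof -
  let ?c = "fc K s \<rho> x" and ?l = "fl K s \<rho> x"
  have hiC: "?c k = x" if "K \<le> k" for k using that unfolding fc_def by simp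
  show "?c K = x" by (simp add: hiC)
  have c0: "?c 0 = 0" using fc_step[of 0 K] K by simp
  have le: "?c k \<le> s k - \<rho> k + ?c (Suc k)" for k
  proof (cases "k < K")
    case True then show ?thesis using fc_step[OF True, of s \<rho> x] by (auto simp: Let_def)
  next
    case False then show ?thesis using hiC by simp
  qed
  have eq: "?l k + \<rho> k + ?c k = s k + ?c (Suc k)" for k
    using le[of k] rs unfolding fl_def by (metis add.commute diff_add_inverse2 le_add_diff_inverse2
        Nat.le_diff_conv2 le_add2 le_diff_conv add_diff_assoc2 add.assoc) 
  have cap: "?l (Suc k) \<le> \<rho> k \<and> (0 < ?c (Suc k) \<longrightarrow> ?l (Suc k) = \<rho> k)" for k
  proof (cases "Suc k < K")
    case True
    then show ?thesis using fc_step[OF True, of s \<rho> x] unfolding fl_def by (auto simp: Let_def)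
  next
    case False
    then have "s (Suc k) = 0" "\<rho> (Suc k) = 0" "\<rho> k = 0" using sK rK by auto
    then show ?thesis using hiC[of "Suc k"] hiC[of "Suc (Suc k)"] False unfolding fl_def by auto
  qed
  show "Rel s \<rho> ?l ?c" unfolding Rel_def using c0 eq cap by auto
  show "\<forall>k\<ge>K. ?l k = 0" using sK rK hiC unfolding fl_def by auto
qed

lemma hstripD: "hstrip p q \<Longrightarrow> p k \<le> q k" "hstrip p q \<Longrightarrow> q (Suc k) \<le> p k"
  unfolding hstrip_def by auto

lemma F_strips:
  assumes R: "Rel (\<lambda>k. \<mu> k + \<nu> k) \<rho> l c" and h1: "hstrip \<rho> \<mu>" and h2: "hstrip \<rho> \<nu>"
  shows "hstrip \<mu> l" "hstrip \<nu> l"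
proof -
  have ge: "\<mu> k \<le> l k \<and> \<nu> k \<le> l k" for k
  proof (cases "c k = 0")
    case True
    then show ?thesis using RelD(2)[OF R, of k] hstripD(1)[OF h1, of k] hstripD(1)[OF h2, of k] by simp
  next
    case False
    then obtain k0 where k: "k = Suc k0" using RelD(1)[OF R] by (cases k) auto
    then have "l k = \<rho> k0" using RelD(4)[OF R, of k0] False by simp
    then show ?thesis using k hstripD(2)[OF h1, of k0] hstripD(2)[OF h2, of k0] by simp
  qed
  have le: "l (Suc k) \<le> \<mu> k \<and> l (Suc k) \<le> \<nu> k" for k
    using RelD(3)[OF R, of k] hstripD(1)[OF h1, of k] hstripD(1)[OF h2, of k] by simp
  show "hstrip \<mu> l" "hstrip \<nu> l" unfolding hstrip_def using ge le by auto
qed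

lemma B_strips:
  assumes R: "Rel (\<lambda>k. \<mu> k + \<nu> k) \<rho> l c" and h1: "hstrip \<mu> l" and h2: "hstrip \<nu> l"
  shows "hstrip \<rho> \<mu>" "hstrip \<rho> \<nu>"
proof -
  have le: "\<rho> k \<le> \<mu> k \<and> \<rho> k \<le> \<nu> k" for k
  proof (cases "c (Suc k) = 0")
    case True
    then show ?thesis using RelD(2)[OF R, of k] hstripD(1)[OF h1, of k] hstripD(1)[OF h2, of k] by simp
  next
    case False
    then have "\<rho> k = l (Suc k)" using RelD(4)[OF R, of k] by simp
    then show ?thesis using hstripD(2)[OF h1, of k] hstripD(2)[OF h2, of k] by simp
  qed
  have ge: "\<mu> (Suc k) \<le> \<rho> k \<and> \<nu> (Suc k) \<le> \<rho> k" for k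
    using RelD(3)[OF R, of k] hstripD(1)[OF h1, of "Suc k"] hstripD(1)[OF h2, of "Suc k"] by simp
  show "hstrip \<rho> \<mu>" "hstrip \<rho> \<nu>" unfolding hstrip_def using ge le by auto
qed

lemma Rel_size:
  assumes R: "Rel s \<rho> l c"
  shows "(\<Sum>k<N. l k + \<rho> k) = (\<Sum>k<N. s k) + c N"
proof (induction N)
  case 0 then show ?case using RelD(1)[OF R] by simp
next
  case (Suc N) then show ?case using RelD(2)[OF R, of N] by simp
qed

lemma hstrip_antitone:
  assumes "hstrip p q" "q t = 0" "t \<le> k" shows "q k = 0"
  using assms(3)
proof (induction k rule: dec_induct)
  case base then show ?case using assms(2) .
next
  case (step k) then show ?case using hstripD(1)[OF assms(1), of k] hstripD(2)[OF assms(1), of k] by simp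
qed

lemma zero_char:
  assumes R: "Rel (\<lambda>k. \<mu> k + \<nu> k) \<rho> l c" and h1: "hstrip \<rho> \<mu>" and h2: "hstrip \<rho> \<nu>"
    and bd: "\<forall>k\<ge>K. \<mu> k = 0 \<and> \<nu> k = 0 \<and> l k = 0"
  shows "l t = 0 \<longleftrightarrow> \<mu> t = 0 \<and> \<nu> t = 0 \<and> (0 < c K \<longrightarrow> 0 < t \<and> \<rho> (t - 1) = 0)"
proof -
  note s = F_strips[OF R h1 h2]
  have rm: "\<rho> k \<le> \<mu> k" for k using hstripD(1)[OF h1] .
  show ?thesis
  proof
    assume lt: "l t = 0"
    have mt: "\<mu> t = 0" "\<nu> t = 0" using hstripD(1)[OF s(1), of t] hstripD(1)[OF s(2), of t] lt by auto
    have z: "\<forall>k\<ge>t. l k = 0 \<and> \<rho> k = 0 \<and> \<mu> k + \<nu> k = 0"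
      using hstrip_antitone[OF s(1) lt] hstrip_antitone[OF h1 mt(1)] hstrip_antitone[OF h2 mt(2)] rm
      by (metis add_is_0 le_zero_eq)
    have zK: "\<forall>k\<ge>K. l k = 0 \<and> \<rho> k = 0 \<and> \<mu> k + \<nu> k = 0" using bd rm by (metis add_is_0 le_zero_eq)
    have ct: "c t = c K"
    proof (cases "t \<le> K")
      case True then show ?thesis using Rel_const[OF R z True] by simp
    next
      case False then show ?thesis using Rel_const[OF R zK, of t] by simp
    qed
    have "0 < c K \<longrightarrow> 0 < t \<and> \<rho> (t - 1) = 0"
    proof
      assume "0 < c K"
      then have ctp: "0 < c t" using ct by simp
      then obtain t0 where t0: "t = Suc t0" using RelD(1)[OF R] by (cases t) auto
      then show "0 < t \<and> \<rho> (t - 1) = 0" using RelD(4)[OF R, of t0] ctp lt by simp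
    qed
    then show "\<mu> t = 0 \<and> \<nu> t = 0 \<and> (0 < c K \<longrightarrow> 0 < t \<and> \<rho> (t - 1) = 0)" using mt by simp
  next
    assume a: "\<mu> t = 0 \<and> \<nu> t = 0 \<and> (0 < c K \<longrightarrow> 0 < t \<and> \<rho> (t - 1) = 0)"
    show "l t = 0"
    proof (cases "0 < c K")
      case True
      then obtain t0 where t0: "t = Suc t0" "\<rho> t0 = 0" using a by (cases t) auto
      then show ?thesis using RelD(3)[OF R, of t0] by simp
    next
      case False
      show ?thesis
      proof (cases "K \<le> t")
        case True then show ?thesis using bd by simp
      next
        case tK: False
        have z: "\<mu> k = 0 \<and> \<nu> k = 0 \<and> \<rho> k = 0" if "t \<le> k" for k
          using hstrip_antitone[OF h1 _ that] hstrip_antitone[OF h2 _ that] a rm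
          by (metis le_zero_eq)
        have st: "l k + c k = c (Suc k)" if "t \<le> k" for k using RelD(2)[OF R, of k] z[OF that] by simp
        have mono: "c (Suc t) \<le> c k" if "Suc t \<le> k" for k
          using that
        proof (induction k rule: dec_induct)
          case base then show ?case by simp
        next
          case (step k) then show ?case using st[of k] by simp
        qed
        have "l t \<le> c (Suc t)" using st[of t] by simp
        also have "\<dots> \<le> c K" using mono tK by simp
        finally show ?thesis using False by simp
      qed
    qed
  qed
qed

fun gr :: "nat \<Rightarrow> (nat \<Rightarrow> nat \<Rightarrow> nat) \<Rightarrow> nat \<Rightarrow> nat \<Rightarrow> (nat \<Rightarrow> nat)" where
  "gr K G 0 j = (\<lambda>_. 0)"
| "gr K G (Suc i) 0 = (\<lambda>_. 0)"
| "gr K G (Suc i) (Suc j) = fl K (\<lambda>k. gr K G i (Suc j) k + gr K G (Suc i) j k) (gr K G i j) (G (Suc i) (Suc j))"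

fun DP :: "(nat \<Rightarrow> nat \<Rightarrow> nat) \<Rightarrow> nat \<Rightarrow> nat \<Rightarrow> nat" where
  "DP G 0 j = 0"
| "DP G (Suc i) 0 = 0"
| "DP G (Suc i) (Suc j) = max (max (DP G i (Suc j)) (DP G (Suc i) j))
      (DP G i j + (if 0 < G (Suc i) (Suc j) then 1 else 0))"

lemma DP_le: "DP G i j \<le> i"
proof (induction G i j rule: DP.induct)
  case (3 G i j) then show ?case by simp
qed auto

definition rect :: "(nat \<Rightarrow> nat \<Rightarrow> nat) \<Rightarrow> nat \<Rightarrow> nat \<Rightarrow> nat" where
  "rect G i j = (\<Sum>u\<in>{1..i}. \<Sum>v\<in>{1..j}. G u v)"

lemma rect_step: "rect G (Suc i) (Suc j) + rect G i j = rect G i (Suc j) + rect G (Suc i) j + G (Suc i) (Suc j)"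
  unfolding rect_def by (simp add: sum.distrib)

lemma rect_0: "rect G 0 j = 0" "rect G i 0 = 0" unfolding rect_def by auto

definition Z :: "(nat \<Rightarrow> nat) \<Rightarrow> nat \<Rightarrow> bool" where
  "Z p D \<longleftrightarrow> (\<forall>t. p t = 0 \<longleftrightarrow> D \<le> t)"

definition psize :: "nat \<Rightarrow> (nat \<Rightarrow> nat) \<Rightarrow> nat" where
  "psize K p = (\<Sum>k<K. p k)"

lemma cell:
  assumes K: "i + 1 < K" and Zr: "Z \<rho> Dr" and Zm: "Z \<mu> Dm" and Zn: "Z \<nu> Dn"
    and Dr: "Dr \<le> i" and Dm: "Dm \<le> i" and Dn: "Dn \<le> Suc i"
    and h1: "hstrip \<rho> \<mu>" and h2: "hstrip \<rho> \<nu>"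
  shows "Z (fl K (\<lambda>k. \<mu> k + \<nu> k) \<rho> x) (max (max Dm Dn) (Dr + (if 0 < x then 1 else 0)))"
    "hstrip \<mu> (fl K (\<lambda>k. \<mu> k + \<nu> k) \<rho> x)" "hstrip \<nu> (fl K (\<lambda>k. \<mu> k + \<nu> k) \<rho> x)"
    "psize K (fl K (\<lambda>k. \<mu> k + \<nu> k) \<rho> x) + psize K \<rho> = psize K \<mu> + psize K \<nu> + x"
proof -
  let ?s = "\<lambda>k. \<mu> k + \<nu> k"
  have rs: "\<forall>k. \<rho> k \<le> ?s k" using hstripD(1)[OF h1] by (simp add: trans_le_add1)
  have sK: "\<forall>k\<ge>K. ?s k = 0" using Zm Zn Dm Dn K unfolding Z_def by auto
  have rK: "\<forall>k. K - 1 \<le> k \<longrightarrow> \<rho> k = 0" using Zr Dr K unfolding Z_def by auto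
  note F = Rel_fwd[OF _ rs sK rK, of x]
  have R: "Rel ?s \<rho> (fl K ?s \<rho> x) (fc K ?s \<rho> x)" using F K by auto
  show s1: "hstrip \<mu> (fl K ?s \<rho> x)" "hstrip \<nu> (fl K ?s \<rho> x)" using F_strips[OF R h1 h2] by auto
  have bd: "\<forall>k\<ge>K. \<mu> k = 0 \<and> \<nu> k = 0 \<and> fl K ?s \<rho> x k = 0" using sK F(3) K by auto
  note zc = zero_char[OF R h1 h2 bd]
  have DrDm: "Dr \<le> Dm" using Zr Zm hstripD(1)[OF h1, of Dm] unfolding Z_def by (metis le_zero_eq order_refl)
  have cK: "fc K ?s \<rho> x K = x" using F K by auto
  show "Z (fl K ?s \<rho> x) (max (max Dm Dn) (Dr + (if 0 < x then 1 else 0)))"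
    unfolding Z_def
  proof
    fix t
    show "(fl K ?s \<rho> x t = 0) = (max (max Dm Dn) (Dr + (if 0 < x then 1 else 0)) \<le> t)"
      using zc[of t] cK Zr Zm Zn DrDm unfolding Z_def by (cases t) auto
  qed
  show "psize K (fl K ?s \<rho> x) + psize K \<rho> = psize K \<mu> + psize K \<nu> + x"
    using Rel_size[OF R, of K] cK unfolding psize_def by (simp add: sum.distrib)
qed

lemma growth:
  assumes "i < K"
  shows "Z (gr K G i j) (DP G i j) \<and> psize K (gr K G i j) = rect G i j \<and>
         hstrip (gr K G i j) (gr K G i (Suc j)) \<and> (0 < i \<longrightarrow> hstrip (gr K G (i - 1) j) (gr K G i j))"
  using assms
proof (induction i arbitrary: j)
  case 0
  then show ?case unfolding Z_def hstrip_def psize_def by (simp add: rect_0)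
next
  case (Suc i)
  have IH: "Z (gr K G i j) (DP G i j) \<and> psize K (gr K G i j) = rect G i j \<and>
         hstrip (gr K G i j) (gr K G i (Suc j))" for j
    using Suc by auto
  have S: "Z (gr K G (Suc i) j) (DP G (Suc i) j) \<and> psize K (gr K G (Suc i) j) = rect G (Suc i) j \<and>
         hstrip (gr K G i j) (gr K G (Suc i) j) \<and>
         (\<forall>j'<j. hstrip (gr K G (Suc i) j') (gr K G (Suc i) (Suc j')))" for j
  proof (induction j)
    case 0
    have "gr K G i 0 = (\<lambda>_. 0)" by (cases i) auto
    then show ?case unfolding Z_def psize_def hstrip_def by (simp add: rect_0)
  next
    case (Suc j)
    have c: "i + 1 < K" using \<open>Suc i < K\<close> by simp
    note C = cell[OF c conjunct1[OF IH[of j]] conjunct1[OF IH[of "Suc j"]] conjunct1[OF Suc.IH]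
        DP_le DP_le DP_le conjunct2[OF conjunct2[OF IH[of j]]]
        conjunct1[OF conjunct2[OF conjunct2[OF Suc.IH]]], of "G (Suc i) (Suc j)"]
    have g: "gr K G (Suc i) (Suc j) = fl K (\<lambda>k. gr K G i (Suc j) k + gr K G (Suc i) j k) (gr K G i j) (G (Suc i) (Suc j))"
      by simp
    show ?case
    proof (intro conjI)
      show "Z (gr K G (Suc i) (Suc j)) (DP G (Suc i) (Suc j))" using C(1) g by simp
      show "psize K (gr K G (Suc i) (Suc j)) = rect G (Suc i) (Suc j)"
        using C(4) g IH[of j] IH[of "Suc j"] Suc.IH rect_step[of G i j] by simp
      show "hstrip (gr K G i (Suc j)) (gr K G (Suc i) (Suc j))" using C(2) g by simp
      show "\<forall>j'<Suc j. hstrip (gr K G (Suc i) j') (gr K G (Suc i) (Suc j'))"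
        using Suc.IH C(3) g less_Suc_eq by auto
    qed
  qed
  show ?case using S[of j] S[of "Suc j"] by auto
qed


lemma growth_v:
  assumes "Suc i < K"
  shows "hstrip (gr K G i j) (gr K G (Suc i) j)"
  using growth[OF assms, of G j] by simp

fun bg :: "nat \<Rightarrow> (nat \<Rightarrow> nat \<Rightarrow> nat) \<Rightarrow> (nat \<Rightarrow> nat \<Rightarrow> nat) \<Rightarrow> nat \<Rightarrow> nat \<Rightarrow> nat \<Rightarrow> nat" where
  "bg n P Q 0 b = P (n - b)"
| "bg n P Q (Suc a) 0 = Q (n - Suc a)"
| "bg n P Q (Suc a) (Suc b) = brho (\<lambda>k. bg n P Q (Suc a) b k + bg n P Q a (Suc b) k) (bg n P Q a b)"

definition pchain :: "nat \<Rightarrow> nat \<Rightarrow> (nat \<Rightarrow> nat \<Rightarrow> nat) \<Rightarrow> bool" where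
  "pchain n d P \<longleftrightarrow> P 0 = (\<lambda>_. 0) \<and> (\<forall>j<n. hstrip (P j) (P (Suc j))) \<and> (\<forall>k\<ge>d. P n k = 0)"

lemma hstrip_zero: "hstrip (\<lambda>_. 0) (\<lambda>_. 0)" unfolding hstrip_def by simp

lemma bg_cell:
  assumes "hstrip (bg n P Q (Suc a) b) (bg n P Q a b)" "hstrip (bg n P Q a (Suc b)) (bg n P Q a b)"
  shows "hstrip (bg n P Q (Suc a) (Suc b)) (bg n P Q (Suc a) b)"
        "hstrip (bg n P Q (Suc a) (Suc b)) (bg n P Q a (Suc b))"
  using B_strips[OF Rel_bwd assms] by simp_all

lemma bg_strips:
  assumes P: "pchain n d P" and Q: "pchain n d Q" and PQ: "P n = Q n"
  shows "hstrip (bg n P Q (Suc a) b) (bg n P Q a b) \<and> hstrip (bg n P Q a (Suc b)) (bg n P Q a b)"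
proof -
  have Pst: "hstrip (P (n - Suc b)) (P (n - b))" for b
  proof (cases "b < n")
    case True then have "n - b = Suc (n - Suc b)" by simp
    moreover have "n - Suc b < n" using True by simp
    ultimately show ?thesis using P unfolding pchain_def by metis
  next
    case False then show ?thesis using P hstrip_zero unfolding pchain_def by simp
  qed
  have Qst: "hstrip (Q (n - Suc a)) (Q (n - a))" for a
  proof (cases "a < n")
    case True then have "n - a = Suc (n - Suc a)" by simp
    moreover have "n - Suc a < n" using True by simp
    ultimately show ?thesis using Q unfolding pchain_def by metis
  next
    case False then show ?thesis using Q hstrip_zero unfolding pchain_def by simp
  qed
  have E2: "\<forall>b. hstrip (bg n P Q a (Suc b)) (bg n P Q a b)" for a
  proof (induction a)
    case 0 then show ?case using Pst by simp
  next
    case (Suc a)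
    note IHa = Suc.IH
    have T: "hstrip (bg n P Q (Suc a) b) (bg n P Q a b) \<and>
        (\<forall>b'<b. hstrip (bg n P Q (Suc a) (Suc b')) (bg n P Q (Suc a) b'))" for b
    proof (induction b)
      case 0
      show ?case using Qst[of a] PQ by (cases a) auto
    next
      case (Suc b)
      note c = bg_cell[OF conjunct1[OF Suc.IH] spec[OF IHa, of b]]
      show ?case using c Suc.IH less_Suc_eq by auto
    qed
    show ?case using T by blast
  qed
  have E1: "hstrip (bg n P Q (Suc a) b) (bg n P Q a b)"
  proof (induction b)
    case 0 show ?case using Qst[of a] PQ by (cases a) auto
  next
    case (Suc b) show ?case using bg_cell(2)[OF Suc.IH spec[OF E2[of a], of b]] .
  qed
  show ?thesis using E1 E2 by blast
qed

lemma chain_mono: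
  assumes P: "pchain n d P" and j: "j \<le> n" shows "P j k \<le> P n k"
  using j
proof (induction j rule: inc_induct)
  case base then show ?case by simp
next
  case (step j) then show ?case using P hstripD(1)[of "P j" "P (Suc j)" k] unfolding pchain_def
    by (meson le_trans)
qed

lemma bg_le:
  assumes P: "pchain n d P" and Q: "pchain n d Q" and PQ: "P n = Q n"
  shows "bg n P Q a b k \<le> P n k"
proof (induction a arbitrary: b)
  case 0 then show ?case using chain_mono[OF P, of "n - b"] by simp
next
  case (Suc a)
  show ?case
  proof (induction b)
    case 0 then show ?case using chain_mono[OF Q, of "n - Suc a"] PQ by simp
  next
    case (Suc b)
    have "bg n P Q (Suc a) (Suc b) k \<le> bg n P Q (Suc a) b k"
      using hstripD(1)[OF conjunct2[OF bg_strips[OF P Q PQ, of "Suc a" b]]] .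
    then show ?case using Suc.IH by simp
  qed
qed

lemma bg_bound:
  assumes P: "pchain n d P" and Q: "pchain n d Q" and PQ: "P n = Q n" and k: "d \<le> k"
  shows "bg n P Q a b k = 0"
  using bg_le[OF P Q PQ, of a b k] P k unfolding pchain_def by simp

lemma bg_boundary:
  assumes P: "pchain n d P" and Q: "pchain n d Q" and PQ: "P n = Q n" and n: "1 \<le> n"
  shows "bg n P Q n b = (\<lambda>_. 0)" "bg n P Q a n = (\<lambda>_. 0)"
proof -
  obtain n0 where n0: "n = Suc n0" using n by (cases n) auto
  show "bg n P Q n b = (\<lambda>_. 0)"
  proof (induction b)
    case 0 then show ?case using Q n0 unfolding pchain_def by simp
  next
    case (Suc b)
    have "bg n P Q n (Suc b) k \<le> bg n P Q n b k" for k
      using hstripD(1)[OF conjunct2[OF bg_strips[OF P Q PQ, of n b]]] n0 by simp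
    then show ?case using Suc.IH by (simp add: le_zero_eq fun_eq_iff)
  qed
  show "bg n P Q a n = (\<lambda>_. 0)"
  proof (induction a)
    case 0 then show ?case using P n0 unfolding pchain_def by simp
  next
    case (Suc a)
    have "bg n P Q (Suc a) n k \<le> bg n P Q a n k" for k
      using hstripD(1)[OF conjunct1[OF bg_strips[OF P Q PQ, of a n]]] .
    then show ?case using Suc.IH by (simp add: le_zero_eq fun_eq_iff)
  qed
qed

definition bG :: "nat \<Rightarrow> (nat \<Rightarrow> nat \<Rightarrow> nat) \<Rightarrow> (nat \<Rightarrow> nat \<Rightarrow> nat) \<Rightarrow> nat \<Rightarrow> nat \<Rightarrow> nat \<Rightarrow> nat" where
  "bG n P Q K u v = (if 1 \<le> u \<and> u \<le> n \<and> 1 \<le> v \<and> v \<le> n then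
     bc (\<lambda>k. bg n P Q (Suc (n - u)) (n - v) k + bg n P Q (n - u) (Suc (n - v)) k) (bg n P Q (n - u) (n - v)) K
     else 0)"

lemma E4:
  assumes P: "pchain n d P" and Q: "pchain n d Q" and PQ: "P n = Q n" and n: "1 \<le> n" and dK: "d < K"
  shows "i \<le> n \<Longrightarrow> j \<le> n \<Longrightarrow> gr K (bG n P Q K) i j = bg n P Q (n - i) (n - j)"
proof (induction i arbitrary: j)
  case 0 then show ?case using bg_boundary[OF P Q PQ n] by simp
next
  case (Suc i)
  note IHo = Suc.IH
  have si: "Suc i \<le> n" by fact
  show ?case using \<open>j \<le> n\<close>
  proof (induction j)
    case 0 then show ?case using bg_boundary[OF P Q PQ n] by simp
  next
    case (Suc j)
    define a where "a = n - Suc i"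
    define b where "b = n - Suc j"
    have na: "n - i = Suc a" "n - j = Suc b" using si Suc.prems unfolding a_def b_def by auto
    let ?bg = "bg n P Q"
    let ?s = "\<lambda>k. ?bg (Suc a) b k + ?bg a (Suc b) k"
    let ?G = "bG n P Q K"
    have mu: "gr K ?G i (Suc j) = ?bg (Suc a) b" using IHo[of "Suc j"] si Suc.prems na b_def by simp
    have nu: "gr K ?G (Suc i) j = ?bg a (Suc b)" using Suc.IH Suc.prems na a_def by simp
    have rho: "gr K ?G i j = ?bg (Suc a) (Suc b)" using IHo[of j] si Suc.prems na by simp
    have x: "?G (Suc i) (Suc j) = bc ?s (?bg a b) K"
      using si Suc.prems unfolding bG_def a_def b_def by simp
    have g: "gr K ?G (Suc i) (Suc j) = fl K ?s (?bg (Suc a) (Suc b)) (bc ?s (?bg a b) K)"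
      unfolding gr.simps(3) mu nu rho x ..
    have rb: "?bg (Suc a) (Suc b) = brho ?s (?bg a b)" by simp
    have R1: "Rel ?s (?bg (Suc a) (Suc b)) (?bg a b) (bc ?s (?bg a b))" using Rel_bwd rb by simp
    have rs: "\<forall>k. ?bg (Suc a) (Suc b) k \<le> ?s k"
      using hstripD(1)[OF conjunct2[OF bg_strips[OF P Q PQ, of "Suc a" b]]] by (simp add: trans_le_add1)
    have sK: "\<forall>k\<ge>K. ?s k = 0" using bg_bound[OF P Q PQ] dK by simp
    have rK: "\<forall>k. K - 1 \<le> k \<longrightarrow> ?bg (Suc a) (Suc b) k = 0"
    proof (intro allI impI)
      fix k assume "K - 1 \<le> k" then have "d \<le> k" using dK by simp
      then show "?bg (Suc a) (Suc b) k = 0" using bg_bound[OF P Q PQ] by blast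
    qed
    have K1: "1 \<le> K" using dK by simp
    note F = Rel_fwd[OF K1 rs sK rK, of "bc ?s (?bg a b) K"]
    have bds: "\<forall>k\<ge>K. fl K ?s (?bg (Suc a) (Suc b)) (bc ?s (?bg a b) K) k = 0 \<and> ?bg a b k = 0
       \<and> ?bg (Suc a) (Suc b) k = 0 \<and> ?s k = 0"
    proof (intro allI impI conjI)
      fix k assume k: "K \<le> k"
      then have dk: "d \<le> k" using dK by simp
      show "fl K ?s (?bg (Suc a) (Suc b)) (bc ?s (?bg a b) K) k = 0" using F(3) k by (simp only:)
      show "?bg a b k = 0" using bg_bound[OF P Q PQ dk] .
      show "?bg (Suc a) (Suc b) k = 0" by (rule bg_bound[OF P Q PQ dk, of "Suc a" "Suc b"])
      show "?s k = 0" using bg_bound[OF P Q PQ dk] by simp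
    qed
    have "fl K ?s (?bg (Suc a) (Suc b)) (bc ?s (?bg a b) K) = ?bg a b"
      using uniqF[of ?s "?bg (Suc a) (Suc b)" "fl K ?s (?bg (Suc a) (Suc b)) (bc ?s (?bg a b) K)"
         "fc K ?s (?bg (Suc a) (Suc b)) (bc ?s (?bg a b) K)" "?bg a b" "bc ?s (?bg a b)" K] F(1) R1 bds F(2)
      by blast
    then show ?case using g unfolding a_def b_def by (simp only:)
  qed
qed

lemma gr_rel:
  assumes K: "Suc i < K"
  shows "Rel (\<lambda>k. gr K G i (Suc j) k + gr K G (Suc i) j k) (gr K G i j) (gr K G (Suc i) (Suc j))
           (fc K (\<lambda>k. gr K G i (Suc j) k + gr K G (Suc i) j k) (gr K G i j) (G (Suc i) (Suc j)))"
    "fc K (\<lambda>k. gr K G i (Suc j) k + gr K G (Suc i) j k) (gr K G i j) (G (Suc i) (Suc j)) K = G (Suc i) (Suc j)"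
proof -
  let ?s = "\<lambda>k. gr K G i (Suc j) k + gr K G (Suc i) j k"
  have i: "i < K" using K by simp
  note g1 = growth[OF i, of G j] and g2 = growth[OF i, of G "Suc j"] and g3 = growth[OF K, of G j]
  have rs: "\<forall>k. gr K G i j k \<le> ?s k" using hstripD(1)[of "gr K G i j" "gr K G i (Suc j)"] g1
    by (simp add: trans_le_add1)
  have sK: "\<forall>k\<ge>K. ?s k = 0" using g2 g3 DP_le[of G i "Suc j"] DP_le[of G "Suc i" j] K unfolding Z_def by auto
  have rK: "\<forall>k. K - 1 \<le> k \<longrightarrow> gr K G i j k = 0" using g1 DP_le[of G i j] K unfolding Z_def by auto
  have K1: "1 \<le> K" using K by simp
  note F = Rel_fwd[OF K1 rs sK rK, of "G (Suc i) (Suc j)"]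
  show "Rel ?s (gr K G i j) (gr K G (Suc i) (Suc j)) (fc K ?s (gr K G i j) (G (Suc i) (Suc j)))"
    using F(1) by simp
  show "fc K ?s (gr K G i j) (G (Suc i) (Suc j)) K = G (Suc i) (Suc j)" using F(2) .
qed

lemma gr_inj:
  assumes nK: "n < K"
    and top: "\<forall>j\<le>n. gr K G n j = gr K G' n j" and right: "\<forall>i\<le>n. gr K G i n = gr K G' i n"
  shows "\<forall>i j. i \<le> n \<longrightarrow> j \<le> n \<longrightarrow> gr K G i j = gr K G' i j \<and>
           (i < n \<and> j < n \<longrightarrow> G (Suc i) (Suc j) = G' (Suc i) (Suc j))"
proof -
  have "\<forall>i j. i \<le> n \<longrightarrow> j \<le> n \<longrightarrow> (n - i) + (n - j) = t \<longrightarrow> gr K G i j = gr K G' i j \<and>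
           (i < n \<and> j < n \<longrightarrow> G (Suc i) (Suc j) = G' (Suc i) (Suc j))" for t
  proof (induction t rule: less_induct)
    case (less t)
    show ?case
    proof (intro allI impI)
      fix i j assume i: "i \<le> n" and j: "j \<le> n" and t: "n - i + (n - j) = t"
      show "gr K G i j = gr K G' i j \<and> (i < n \<and> j < n \<longrightarrow> G (Suc i) (Suc j) = G' (Suc i) (Suc j))"
      proof (cases "i < n \<and> j < n")
        case False then show ?thesis using top right i j by auto
      next
        case True
        have lt1: "n - Suc i + (n - Suc j) < t" using True t by arith
        have e1: "gr K G (Suc i) (Suc j) = gr K G' (Suc i) (Suc j)"
          using spec[OF spec[OF less.IH[OF lt1], of "Suc i"], of "Suc j"] True by (simp del: gr.simps)
        have lt2: "n - i + (n - Suc j) < t" using True t by arith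
        have e2: "gr K G i (Suc j) = gr K G' i (Suc j)"
          using spec[OF spec[OF less.IH[OF lt2], of i], of "Suc j"] True by (simp del: gr.simps)
        have lt3: "n - Suc i + (n - j) < t" using True t by arith
        have e3: "gr K G (Suc i) j = gr K G' (Suc i) j"
          using spec[OF spec[OF less.IH[OF lt3], of "Suc i"], of j] True by (simp del: gr.simps)
        have K: "Suc i < K" using True nK by simp
        note R = gr_rel[OF K, of G j] and R' = gr_rel[OF K, of G' j]
        have R'': "Rel (\<lambda>k. gr K G i (Suc j) k + gr K G (Suc i) j k) (gr K G' i j) (gr K G (Suc i) (Suc j))
           (fc K (\<lambda>k. gr K G i (Suc j) k + gr K G (Suc i) j k) (gr K G' i j) (G' (Suc i) (Suc j)))"
          using R'(1) e1 e2 e3 by (simp del: gr.simps)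
        have u: "gr K G i j = gr K G' i j \<and> fc K (\<lambda>k. gr K G i (Suc j) k + gr K G (Suc i) j k) (gr K G i j) (G (Suc i) (Suc j)) =
           fc K (\<lambda>k. gr K G i (Suc j) k + gr K G (Suc i) j k) (gr K G' i j) (G' (Suc i) (Suc j))"
          using uniqB[OF R(1) R''] .
        let ?sG = "\<lambda>k. gr K G i (Suc j) k + gr K G (Suc i) j k"
        let ?sG' = "\<lambda>k. gr K G' i (Suc j) k + gr K G' (Suc i) j k"
        have s_eq: "?sG = ?sG'" using e2 e3 by (simp del: gr.simps)
        have "G (Suc i) (Suc j) = fc K ?sG (gr K G i j) (G (Suc i) (Suc j)) K" using R(2) by simp
        also have "\<dots> = fc K ?sG (gr K G' i j) (G' (Suc i) (Suc j)) K" using conjunct2[OF u] by simp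
        also have "\<dots> = G' (Suc i) (Suc j)" using R'(2) s_eq by simp
        finally have "G (Suc i) (Suc j) = G' (Suc i) (Suc j)" .
        with u show ?thesis by (simp del: gr.simps)
      qed
    qed
  qed
  then show ?thesis by blast
qed

definition pm_in :: "(nat \<Rightarrow> nat \<Rightarrow> nat) \<Rightarrow> nat \<Rightarrow> nat \<Rightarrow> (nat \<times> nat) set \<Rightarrow> bool" where
  "pm_in G i j M \<longleftrightarrow> planar_matching G M \<and> M \<subseteq> {1..i} \<times> {1..j}"

lemma pm_in_finite: "pm_in G i j M \<Longrightarrow> finite M"
  unfolding pm_in_def by (meson finite_SigmaI finite_atLeastAtMost finite_subset)

lemma pm_in_mono: "pm_in G i j M \<Longrightarrow> i \<le> i' \<Longrightarrow> j \<le> j' \<Longrightarrow> pm_in G i' j' M"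
  unfolding pm_in_def by auto

lemma pmD: "planar_matching G M \<Longrightarrow> e \<in> M \<Longrightarrow> e' \<in> M \<Longrightarrow> e \<noteq> e' \<Longrightarrow> noncrossing e e'"
  unfolding planar_matching_def by blast

lemma pm_sub: "planar_matching G M \<Longrightarrow> M' \<subseteq> M \<Longrightarrow> planar_matching G M'"
  unfolding planar_matching_def by blast

lemma pm_pos: "planar_matching G M \<Longrightarrow> (u, v) \<in> M \<Longrightarrow> 0 < G u v"
  unfolding planar_matching_def by blast

lemma pm_upper: "pm_in G i j M \<Longrightarrow> card M \<le> DP G i j"
proof (induction G i j arbitrary: M rule: DP.induct)
  case (1 G j) then show ?case unfolding pm_in_def by auto
next
  case (2 G i) then show ?case unfolding pm_in_def by auto
next
  case (3 G i j)
  note pm = "3.prems"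
  have sub: "M \<subseteq> {1..Suc i} \<times> {1..Suc j}" and plm: "planar_matching G M" using pm unfolding pm_in_def by auto
  show ?case
  proof (cases "\<forall>e\<in>M. fst e \<le> i")
    case True
    have "M \<subseteq> {1..i} \<times> {1..Suc j}"
    proof
      fix e assume "e \<in> M" then show "e \<in> {1..i} \<times> {1..Suc j}" using True sub by (cases e) force
    qed
    then have "pm_in G i (Suc j) M" using plm unfolding pm_in_def by simp
    then have "card M \<le> DP G i (Suc j)" using "3.IH"(1) by blast
    then show ?thesis by simp
  next
    case F1: False
    show ?thesis
    proof (cases "\<forall>e\<in>M. snd e \<le> j")
      case True
      have "M \<subseteq> {1..Suc i} \<times> {1..j}"
      proof
        fix e assume "e \<in> M" then show "e \<in> {1..Suc i} \<times> {1..j}" using True sub by (cases e) force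
      qed
      then have "pm_in G (Suc i) j M" using plm unfolding pm_in_def by simp
      then have "card M \<le> DP G (Suc i) j" using "3.IH"(2) by blast
      then show ?thesis by simp
    next
      case F2: False
      obtain e1 where e1: "e1 \<in> M" "\<not> fst e1 \<le> i" using F1 by blast
      obtain e2 where e2: "e2 \<in> M" "\<not> snd e2 \<le> j" using F2 by blast
      have m1: "e1 \<in> {1..Suc i} \<times> {1..Suc j}" "e2 \<in> {1..Suc i} \<times> {1..Suc j}" using e1 e2 sub by blast+
      have e1': "fst e1 = Suc i" "snd e1 \<le> Suc j" using e1(2) m1(1) by (auto simp: mem_Times_iff)
      have e2': "snd e2 = Suc j" "fst e2 \<le> Suc i" using e2(2) m1(2) by (auto simp: mem_Times_iff)
      have "e1 = e2"
      proof (rule ccontr)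
        assume "e1 \<noteq> e2"
        then have "noncrossing e1 e2" using pmD[OF plm e1(1) e2(1)] by simp
        then show False using e1' e2' unfolding noncrossing_def by linarith
      qed
      then have "e1 = (Suc i, Suc j)" using e1'(1) e2'(1) by (simp add: prod_eq_iff)
      then have e: "(Suc i, Suc j) \<in> M" using e1(1) by simp
      then have Gp: "0 < G (Suc i) (Suc j)" using pm_pos[OF plm] by simp
      let ?M = "M - {(Suc i, Suc j)}"
      have "?M \<subseteq> {1..i} \<times> {1..j}"
      proof
        fix e assume eM: "e \<in> ?M"
        then have "noncrossing e (Suc i, Suc j)" using pmD[OF plm _ e] by simp
        moreover have "e \<in> {1..Suc i} \<times> {1..Suc j}" using eM sub by blast
        ultimately show "e \<in> {1..i} \<times> {1..j}" unfolding noncrossing_def by (cases e) auto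
      qed
      moreover have "planar_matching G ?M" using pm_sub[OF plm] by simp
      ultimately have "pm_in G i j ?M" unfolding pm_in_def by simp
      then have "card ?M \<le> DP G i j" using "3.IH"(3) by blast
      moreover have "card M = card ?M + 1" using card_Suc_Diff1[OF pm_in_finite[OF pm] e] by simp
      ultimately show ?thesis using Gp by simp
    qed
  qed
qed

lemma pm_attain: "\<exists>M. pm_in G i j M \<and> card M = DP G i j"
proof (induction G i j rule: DP.induct)
  case (1 G j) then show ?case by (intro exI[of _ "{}"]) (auto simp: pm_in_def planar_matching_def)
next
  case (2 G i) then show ?case by (intro exI[of _ "{}"]) (auto simp: pm_in_def planar_matching_def)
next
  case (3 G i j)
  obtain M1 where M1: "pm_in G i (Suc j) M1" "card M1 = DP G i (Suc j)" using "3.IH"(1) by blast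
  obtain M2 where M2: "pm_in G (Suc i) j M2" "card M2 = DP G (Suc i) j" using "3.IH"(2) by blast
  obtain M3 where M3: "pm_in G i j M3" "card M3 = DP G i j" using "3.IH"(3) by blast
  have M1': "pm_in G (Suc i) (Suc j) M1" using pm_in_mono[OF M1(1)] by simp
  have M2': "pm_in G (Suc i) (Suc j) M2" using pm_in_mono[OF M2(1)] by simp
  have M3': "pm_in G (Suc i) (Suc j) M3" using pm_in_mono[OF M3(1)] by simp
  show ?case
  proof (cases "0 < G (Suc i) (Suc j)")
    case False
    then show ?thesis using M1 M2 M3 M1' M2' M3' by (cases "DP G i (Suc j) \<le> DP G (Suc i) j") (auto simp: max_def)
  next
    case True
    let ?M = "insert (Suc i, Suc j) M3"
    have nin: "(Suc i, Suc j) \<notin> M3" using M3 unfolding pm_in_def by auto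
    have pm: "pm_in G (Suc i) (Suc j) ?M"
      using M3 True unfolding pm_in_def planar_matching_def noncrossing_def by auto
    have c: "card ?M = DP G i j + 1" using nin pm_in_finite[OF M3(1)] M3(2) by simp
    show ?thesis using M1 M2 M1' M2' pm c True by (cases "DP G i (Suc j) \<le> DP G (Suc i) j") (auto simp: max_def)
  qed
qed

lemma L_eq_DP:
  assumes "regular_multigraph n r G"
  shows "L G = DP G n n"
proof -
  have eq: "{card M | M. planar_matching G M} = {card M | M. pm_in G n n M}"
  proof -
    have z: "G u v = 0" if "u \<notin> {1..n} \<or> v \<notin> {1..n}" for u v
      using assms that unfolding regular_multigraph_def by blast
    have "pm_in G n n M" if pm: "planar_matching G M" for M
    proof -
      have "M \<subseteq> {1..n} \<times> {1..n}"
      proof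
        fix e assume "e \<in> M"
        then have "0 < G (fst e) (snd e)" using pm_pos[OF pm, of "fst e" "snd e"] by simp
        then have "fst e \<in> {1..n} \<and> snd e \<in> {1..n}" using z[of "fst e" "snd e"] by (metis less_irrefl)
        then show "e \<in> {1..n} \<times> {1..n}" by (simp add: mem_Times_iff)
      qed
      then show ?thesis using pm unfolding pm_in_def by simp
    qed
    moreover have "pm_in G n n M \<Longrightarrow> planar_matching G M" for M unfolding pm_in_def by simp
    ultimately have iff: "planar_matching G M \<longleftrightarrow> pm_in G n n M" for M by blast
    show ?thesis using iff by simp
  qed
  have fin: "finite {card M | M. pm_in G n n M}"
    by (rule finite_subset[of _ "{0..DP G n n}"]) (auto dest: pm_upper)
  obtain M0 where M0: "pm_in G n n M0" "card M0 = DP G n n" using pm_attain by blast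
  show ?thesis unfolding L_def eq
  proof (rule Max_eqI[OF fin])
    fix y assume "y \<in> {card M | M. pm_in G n n M}"
    then show "y \<le> DP G n n" using pm_upper by blast
  next
    show "DP G n n \<in> {card M | M. pm_in G n n M}" using M0 by (metis (mono_tags, lifting) mem_Collect_eq)
  qed
qed

definition blk :: "nat \<Rightarrow> (nat \<Rightarrow> nat) \<Rightarrow> (nat \<Rightarrow> nat) \<Rightarrow> nat list" where
  "blk d p q = concat (map (\<lambda>k. replicate (q k - p k) (Suc k)) (rev [0..<d]))"

definition word :: "nat \<Rightarrow> nat \<Rightarrow> (nat \<Rightarrow> nat \<Rightarrow> nat) \<Rightarrow> nat list" where
  "word n d P = concat (map (\<lambda>j. blk d (P j) (P (Suc j))) [0..<n])"

lemma blk_Suc: "blk (Suc d) p q = replicate (q d - p d) (Suc d) @ blk d p q"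
  unfolding blk_def by simp

lemma count_replicate: "count_list (replicate m x) c = (if x = c then m else 0)"
  by (induction m) auto

lemma sorted_replicate_ge: "sorted_wrt (\<ge>) (replicate m (x::nat))"
  by (induction m) auto

lemma blk_0: "blk 0 p q = []" unfolding blk_def by simp

lemma blk_count: "count_list (blk d p q) c = (if 1 \<le> c \<and> c \<le> d then q (c - 1) - p (c - 1) else 0)"
proof (induction d)
  case 0 then show ?case unfolding blk_def by simp
next
  case (Suc d)
  have "count_list (replicate (q d - p d) (Suc d)) c = (if c = Suc d then q d - p d else 0)"
    by (simp add: count_replicate)
  then show ?case using Suc by (cases "c = Suc d") (auto simp: blk_Suc)
qed

lemma blk_set: "set (blk d p q) \<subseteq> {1..d}"
  unfolding blk_def by auto

lemma blk_sorted: "sorted_wrt (\<ge>) (blk d p q)"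
proof (induction d)
  case 0 then show ?case unfolding blk_def by simp
next
  case (Suc d)
  have "\<forall>x\<in>set (blk d p q). x \<le> Suc d" using blk_set[of d p q] by auto
  then show ?case using Suc sorted_replicate_ge by (auto simp: blk_Suc sorted_wrt_append)
qed

lemma blk_len: "length (blk d p q) = (\<Sum>k<d. q k - p k)"
  by (induction d) (auto simp: blk_Suc blk_0)

lemma concat_blocks_take:
  assumes "\<forall>b\<in>set bl. length b = r" "j < length bl" "t \<le> r"
  shows "take (r * j + t) (concat bl) = concat (take j bl) @ take t (bl ! j)"
  using assms
proof (induction bl arbitrary: j)
  case Nil then show ?case by simp
next
  case (Cons b bl)
  show ?case
  proof (cases j)
    case 0 then show ?thesis using Cons.prems by simp
  next
    case (Suc j0)
    have lb: "length b = r" using Cons.prems by simp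
    have "take (r * j + t) (concat (b # bl)) = b @ take (r * j0 + t) (concat bl)"
      using lb Suc by (simp add: take_append)
    also have "\<dots> = b @ concat (take j0 bl) @ take t (bl ! j0)"
      using Cons.IH[of j0] Cons.prems Suc by simp
    finally show ?thesis using Suc by simp
  qed
qed

lemma concat_blocks_take0:
  assumes "\<forall>b\<in>set bl. length b = r" "j \<le> length bl"
  shows "take (r * j) (concat bl) = concat (take j bl)"
proof (cases "j < length bl")
  case True then show ?thesis using concat_blocks_take[OF assms(1) True, of 0] by simp
next
  case False
  then have j: "j = length bl" using assms(2) by simp
  have "length (concat bl) = r * length bl" using assms(1)
    by (induction bl) auto
  then show ?thesis using j by simp
qed

lemma length_concat_blocks:
  assumes "\<forall>b\<in>set bl. length b = r" shows "length (concat bl) = r * length bl"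
  using assms by (induction bl) auto

lemma concat_blocks_nth:
  assumes "\<forall>b\<in>set bl. length b = r" "j < length bl" "t < r"
  shows "concat bl ! (r * j + t) = bl ! j ! t"
proof -
  have "take (r * j + Suc t) (concat bl) = concat (take j bl) @ take (Suc t) (bl ! j)"
    using concat_blocks_take[OF assms(1,2), of "Suc t"] assms(3) by simp
  moreover have lj: "length (concat (take j bl)) = r * j"
  proof -
    have "\<forall>b\<in>set (take j bl). length b = r" using assms(1) by (meson in_set_takeD)
    then have "length (concat (take j bl)) = r * length (take j bl)" by (rule length_concat_blocks)
    then show ?thesis using assms(2) by simp
  qed
  moreover have "length (bl ! j) = r" using assms(1,2) by simp
  ultimately have "take (r * j + Suc t) (concat bl) ! (r * j + t) = bl ! j ! t"
    using assms(3) by (simp add: nth_append)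
  then show ?thesis by simp
qed

definition wchain :: "nat \<Rightarrow> nat \<Rightarrow> nat \<Rightarrow> nat \<Rightarrow> (nat \<Rightarrow> nat \<Rightarrow> nat) \<Rightarrow> bool" where
  "wchain n r d K P \<longleftrightarrow> pchain n d P \<and> (\<forall>j\<le>n. \<forall>k\<ge>d. P j k = 0) \<and> (\<forall>j\<le>n. psize K (P j) = r * j) \<and> d \<le> K"

definition lattice :: "nat \<Rightarrow> nat list \<Rightarrow> bool" where
  "lattice d w \<longleftrightarrow> (\<forall>k c. 1 \<le> c \<and> c < d \<longrightarrow> count_list (take k w) (Suc c) \<le> count_list (take k w) c)"

definition blockord :: "nat \<Rightarrow> nat \<Rightarrow> nat list \<Rightarrow> bool" where
  "blockord n r w \<longleftrightarrow> (\<forall>i\<in>{1..n}. \<forall>s. 1 \<le> s \<and> s < r \<longrightarrow> w ! (r * (i - 1) + s - 1) \<ge> w ! (r * (i - 1) + s))"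

lemma psize_d: "d \<le> K \<Longrightarrow> \<forall>k\<ge>d. p k = 0 \<Longrightarrow> psize K p = (\<Sum>k<d. p k)"
  unfolding psize_def by (rule sum.mono_neutral_right) auto

lemma count_take_le: "count_list (take t xs) x \<le> count_list xs x"
proof -
  have "count_list xs x = count_list (take t xs) x + count_list (drop t xs) x"
    by (metis append_take_drop_id count_list_append)
  then show ?thesis by simp
qed

lemma wchain_hstrip: "wchain n r d K P \<Longrightarrow> j < n \<Longrightarrow> hstrip (P j) (P (Suc j))"
  unfolding wchain_def pchain_def by blast

lemma wchain_part: assumes "wchain n r d K P" "j \<le> n" shows "P j (Suc k) \<le> P j k"
proof (cases j)
  case 0 then show ?thesis using assms unfolding wchain_def pchain_def by simp
next
  case (Suc j0)
  then have h: "hstrip (P j0) (P j)" using wchain_hstrip[OF assms(1), of j0] assms(2) by simp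
  show ?thesis using hstripD(1)[OF h, of k] hstripD(2)[OF h, of k] by simp
qed

lemma wchain_blk_len:
  assumes W: "wchain n r d K P" and j: "j < n"
  shows "length (blk d (P j) (P (Suc j))) = r"
proof -
  have h: "hstrip (P j) (P (Suc j))" using wchain_hstrip[OF W j] .
  have z1: "\<forall>k\<ge>d. P j k = 0" "\<forall>k\<ge>d. P (Suc j) k = 0" "d \<le> K" using W j unfolding wchain_def by auto
  have s: "psize K (P j) = r * j" "psize K (P (Suc j)) = r * Suc j" using W j unfolding wchain_def by auto
  have "length (blk d (P j) (P (Suc j))) = (\<Sum>k<d. P (Suc j) k) - (\<Sum>k<d. P j k)"
    unfolding blk_len by (rule sum_subtractf_nat) (use hstripD(1)[OF h] in auto)
  also have "\<dots> = r" using s psize_d[OF z1(3) z1(1)] psize_d[OF z1(3) z1(2)] by simp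
  finally show ?thesis .
qed

lemma word_blocks:
  assumes "wchain n r d K P"
  shows "\<forall>b\<in>set (map (\<lambda>j. blk d (P j) (P (Suc j))) [0..<n]). length b = r"
  using wchain_blk_len[OF assms] by auto

lemma word_len: "wchain n r d K P \<Longrightarrow> length (word n d P) = r * n"
  unfolding word_def using length_concat_blocks[OF word_blocks] by simp

lemma word_set: "set (word n d P) \<subseteq> {1..d}"
  unfolding word_def using blk_set by fastforce

lemma word_nth:
  assumes W: "wchain n r d K P" and j: "j < n" and t: "t < r"
  shows "word n d P ! (r * j + t) = blk d (P j) (P (Suc j)) ! t"
  unfolding word_def using concat_blocks_nth[OF word_blocks[OF W], of j t] j t by simp

lemma word_blockord:
  assumes W: "wchain n r d K P" shows "blockord n r (word n d P)"
  unfolding blockord_def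
proof (intro ballI allI impI)
  fix i s assume i: "i \<in> {1..n}" and s: "1 \<le> s \<and> s < r"
  have j: "i - 1 < n" using i by auto
  have e1: "word n d P ! (r * (i - 1) + s - 1) = blk d (P (i - 1)) (P (Suc (i - 1))) ! (s - 1)"
  proof -
    have "r * (i - 1) + s - 1 = r * (i - 1) + (s - 1)" using s by simp
    moreover have "s - 1 < r" using s by linarith
    ultimately show ?thesis using word_nth[OF W j, of "s - 1"] by simp
  qed
  have e2: "word n d P ! (r * (i - 1) + s) = blk d (P (i - 1)) (P (Suc (i - 1))) ! s"
    using word_nth[OF W j, of s] s by simp
  have "blk d (P (i - 1)) (P (Suc (i - 1))) ! s \<le> blk d (P (i - 1)) (P (Suc (i - 1))) ! (s - 1)"
    using sorted_wrt_nth_less[OF blk_sorted, of "s - 1" s] wchain_blk_len[OF W j] s by simp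
  then show "word n d P ! (r * (i - 1) + s) \<le> word n d P ! (r * (i - 1) + s - 1)" using e1 e2 by simp
qed

lemma word_count_take:
  assumes W: "wchain n r d K P" and j: "j \<le> n"
  shows "count_list (take (r * j) (word n d P)) c = (if 1 \<le> c \<and> c \<le> d then P j (c - 1) else 0)"
  using j
proof (induction j)
  case 0 then show ?case using W unfolding wchain_def pchain_def by simp
next
  case (Suc j)
  let ?bl = "map (\<lambda>j. blk d (P j) (P (Suc j))) [0..<n]"
  have jn: "j < n" using Suc.prems by simp
  have t1: "take (r * Suc j) (word n d P) = concat (take (Suc j) ?bl)"
    unfolding word_def using concat_blocks_take0[OF word_blocks[OF W], of "Suc j"] Suc.prems by simp
  have t0: "take (r * j) (word n d P) = concat (take j ?bl)"
    unfolding word_def using concat_blocks_take0[OF word_blocks[OF W], of j] jn by simp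
  have "concat (take (Suc j) ?bl) = concat (take j ?bl) @ blk d (P j) (P (Suc j))"
    using jn by (simp add: take_Suc_conv_app_nth)
  then have "count_list (take (r * Suc j) (word n d P)) c =
      count_list (take (r * j) (word n d P)) c + count_list (blk d (P j) (P (Suc j))) c"
    using t0 t1 by simp
  also have "\<dots> = (if 1 \<le> c \<and> c \<le> d then P (Suc j) (c - 1) else 0)"
    using Suc.IH jn blk_count[of d "P j" "P (Suc j)" c] hstripD(1)[OF wchain_hstrip[OF W jn], of "c - 1"]
    by simp
  finally show ?case .
qed

lemma word_lattice:
  assumes W: "wchain n r d K P" and r: "1 \<le> r"
  shows "lattice d (word n d P)"
  unfolding lattice_def
proof (intro allI impI)
  fix k c assume c: "1 \<le> c \<and> c < d"
  let ?w = "word n d P"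
  show "count_list (take k ?w) (Suc c) \<le> count_list (take k ?w) c"
  proof (cases "r * n \<le> k")
    case True
    then have "take k ?w = take (r * n) ?w" using word_len[OF W] by simp
    then show ?thesis using word_count_take[OF W order_refl] c wchain_part[OF W order_refl, of "c - 1"]
      by simp
  next
    case False
    define j where "j = k div r"
    define t where "t = k mod r"
    have kjt: "k = r * j + t" unfolding j_def t_def by simp
    have t: "t < r" unfolding t_def using r by simp
    have jn: "j < n" using False kjt by (metis add_lessD1 mult_less_cancel1 not_le)
    let ?bl = "map (\<lambda>j. blk d (P j) (P (Suc j))) [0..<n]"
    have tk: "take k ?w = take (r * j) ?w @ take t (blk d (P j) (P (Suc j)))"
    proof -
      have "take k ?w = concat (take j ?bl) @ take t (?bl ! j)"
        unfolding word_def kjt using concat_blocks_take[OF word_blocks[OF W], of j t] jn t by simp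
      moreover have "take (r * j) ?w = concat (take j ?bl)"
        unfolding word_def using concat_blocks_take0[OF word_blocks[OF W], of j] jn by simp
      ultimately show ?thesis using jn by simp
    qed
    have h: "hstrip (P j) (P (Suc j))" using wchain_hstrip[OF W jn] .
    have a: "count_list (take k ?w) (Suc c) \<le> P j c + (P (Suc j) c - P j c)"
      using tk word_count_take[OF W, of j "Suc c"] jn c count_take_le[of t "blk d (P j) (P (Suc j))" "Suc c"]
        blk_count[of d "P j" "P (Suc j)" "Suc c"] by simp
    have b: "P j c + (P (Suc j) c - P j c) = P (Suc j) c" using hstripD(1)[OF h, of c] by simp
    have cc: "P (Suc j) c \<le> P j (c - 1)" using hstripD(2)[OF h, of "c - 1"] c by simp
    have d: "P j (c - 1) \<le> count_list (take k ?w) c"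
      using tk word_count_take[OF W, of j c] jn c by simp
    show ?thesis using a b cc d by linarith
  qed
qed

definition Pw :: "nat \<Rightarrow> nat \<Rightarrow> nat list \<Rightarrow> nat \<Rightarrow> nat \<Rightarrow> nat" where
  "Pw r d w j k = (if k < d then count_list (take (r * j) w) (Suc k) else 0)"

definition good :: "nat \<Rightarrow> nat \<Rightarrow> nat \<Rightarrow> nat list \<Rightarrow> bool" where
  "good n r d w \<longleftrightarrow> length w = r * n \<and> set w \<subseteq> {1..d} \<and> blockord n r w \<and> lattice d w"

lemma sum_count_d: "set xs \<subseteq> {1..d} \<Longrightarrow> (\<Sum>k<d. count_list xs (Suc k)) = length xs"
  using sum_count_set[of xs "{1..d}"] by (simp add: sum.atLeast1_atMost_eq)

lemma dropWhile_sorted_lt: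
  assumes "sorted_wrt (\<ge>) xs" "x \<in> set (dropWhile (\<lambda>x. a \<le> x) xs)"
  shows "x < (a::nat)"
  using assms
proof (induction xs)
  case Nil then show ?case by simp
next
  case (Cons y ys)
  show ?case
  proof (cases "a \<le> y")
    case True then show ?thesis using Cons by simp
  next
    case False
    then have "x = y \<or> x \<in> set ys" using Cons.prems(2) by simp
    then show ?thesis using False Cons.prems(1) by auto
  qed
qed

lemma good_block_sorted:
  assumes g: "good n r d w" and j: "j < n"
  shows "sorted_wrt (\<ge>) (take r (drop (r * j) w))"
proof -
  let ?B = "take r (drop (r * j) w)"
  have lw: "length w = r * n" using g unfolding good_def by simp
  have lB: "length ?B = r"
  proof -
    have "r * j + r \<le> r * n" using j by (metis add.commute mult_Suc_right mult_le_mono2 Suc_leI)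
    then show ?thesis using lw by simp
  qed
  have bo: "blockord n r w" using g unfolding good_def by simp
  have "\<forall>i. Suc i < length ?B \<longrightarrow> ?B ! i \<ge> ?B ! Suc i"
  proof (intro allI impI)
    fix i assume i: "Suc i < length ?B"
    have "w ! (r * (Suc j - 1) + Suc i - 1) \<ge> w ! (r * (Suc j - 1) + Suc i)"
      using bo i lB j unfolding blockord_def by (metis Suc_leI atLeastAtMost_iff le_add1 plus_1_eq_Suc)
    moreover have "r * j \<le> length w" using lw j by simp
    ultimately show "?B ! i \<ge> ?B ! Suc i" using i lB by (simp add: nth_take nth_drop)
  qed
  then show ?thesis by (subst sorted_wrt_iff_nth_Suc_transp) (auto simp: transp_def)
qed

lemma take_split_block:
  assumes "t \<le> r"
  shows "take (r * j + t) w = take (r * j) w @ take t (take r (drop (r * j) w))"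
  using assms by (simp add: take_add min_def)

lemma Pw_wchain:
  assumes g: "good n r d w" and r: "1 \<le> r" and dK: "d \<le> K"
  shows "wchain n r d K (Pw r d w)"
proof -
  let ?P = "Pw r d w"
  have lw: "length w = r * n" and sw: "set w \<subseteq> {1..d}" and lat: "lattice d w"
    using g unfolding good_def by auto
  have P0: "?P 0 = (\<lambda>_. 0)" unfolding Pw_def by auto
  have Pz: "\<forall>j\<le>n. \<forall>k\<ge>d. ?P j k = 0" unfolding Pw_def by auto
  have Ps: "psize K (?P j) = r * j" if "j \<le> n" for j
  proof -
    have "psize K (?P j) = (\<Sum>k<d. ?P j k)" using psize_d[OF dK] Pz that by blast
    also have "\<dots> = (\<Sum>k<d. count_list (take (r * j) w) (Suc k))" unfolding Pw_def by simp
    also have "\<dots> = length (take (r * j) w)" using sum_count_d sw by (meson order_trans set_take_subset)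
    also have "\<dots> = r * j" using lw that by simp
    finally show ?thesis .
  qed
  have hs: "hstrip (?P j) (?P (Suc j))" if j: "j < n" for j
  proof -
    have a: "?P j k \<le> ?P (Suc j) k" for k
    proof -
      have "take (r * j) w = take (r * j) (take (r * Suc j) w)" by (simp add: min_def)
      then show ?thesis unfolding Pw_def using count_take_le by (metis order_refl)
    qed
    have b: "?P (Suc j) (Suc k) \<le> ?P j k" for k
    proof (cases "Suc k < d")
      case False then show ?thesis unfolding Pw_def by simp
    next
      case True
      let ?B = "take r (drop (r * j) w)"
      have srt: "sorted_wrt (\<ge>) ?B" using good_block_sorted[OF g j] .
      define t where "t = length (takeWhile (\<lambda>x. Suc (Suc k) \<le> x) ?B)"
      have tr: "t \<le> r" unfolding t_def by (metis length_takeWhile_le length_take min.bounded_iff nle_le)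
      have tt: "take t ?B = takeWhile (\<lambda>x. Suc (Suc k) \<le> x) ?B"
        unfolding t_def by (metis append_eq_conv_conj takeWhile_dropWhile_id)
      have td: "drop t ?B = dropWhile (\<lambda>x. Suc (Suc k) \<le> x) ?B"
        unfolding t_def by (metis append_eq_conv_conj takeWhile_dropWhile_id)
      have p: "take (r * j + t) w = take (r * j) w @ take t ?B" using take_split_block[OF tr] .
      have full: "take (r * Suc j) w = take (r * j) w @ ?B" using take_split_block[of r r j w] by (simp add: add.commute)
      have c1: "count_list (take t ?B) (Suc k) = 0"
        using tt by (simp add: count_list_0_iff) (metis set_takeWhileD Suc_n_not_le_n)
      have c2: "count_list (drop t ?B) (Suc (Suc k)) = 0"
        using td dropWhile_sorted_lt[OF srt] by (simp add: count_list_0_iff) blast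
      have c3: "count_list ?B (Suc (Suc k)) = count_list (take t ?B) (Suc (Suc k))"
        using c2 by (metis add_0_right append_take_drop_id count_list_append)
      have "count_list (take (r * j + t) w) (Suc (Suc k)) \<le> count_list (take (r * j + t) w) (Suc k)"
        using lat True unfolding lattice_def by simp
      then have "count_list (take (r * Suc j) w) (Suc (Suc k)) \<le> count_list (take (r * j) w) (Suc k)"
        using p full c1 c3 by simp
      then show ?thesis unfolding Pw_def using True by simp
    qed
    show ?thesis unfolding hstrip_def using a b by auto
  qed
  show ?thesis unfolding wchain_def pchain_def using P0 Pz Ps hs dK by auto
qed

lemma Pw_word:
  assumes g: "good n r d w" and r: "1 \<le> r" and dK: "d \<le> K"
  shows "word n d (Pw r d w) = w"
proof -
  let ?P = "Pw r d w"
  have W: "wchain n r d K ?P" using Pw_wchain[OF assms] .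
  have lw: "length w = r * n" and sw: "set w \<subseteq> {1..d}" using g unfolding good_def by auto
  have blkeq: "blk d (?P j) (?P (Suc j)) = take r (drop (r * j) w)" if j: "j < n" for j
  proof -
    let ?B = "take r (drop (r * j) w)" and ?b = "blk d (?P j) (?P (Suc j))"
    have full: "take (r * Suc j) w = take (r * j) w @ ?B" using take_split_block[of r r j w] by (simp add: add.commute)
    have "count_list ?b x = count_list ?B x" for x
    proof (cases "1 \<le> x \<and> x \<le> d")
      case True
      then have "x - 1 < d" by arith
      then show ?thesis using full True unfolding blk_count Pw_def by simp
    next
      case False
      have "x \<notin> set ?B"
      proof
        assume "x \<in> set ?B"
        then have "x \<in> set w" by (meson in_set_dropD in_set_takeD)
        then show False using sw False by auto
      qed
      then show ?thesis using False unfolding blk_count by auto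
    qed
    then have m: "mset (rev ?b) = mset (rev ?B)" by (simp add: multiset_eq_iff count_mset)
    have s1: "sorted (rev ?b)" using blk_sorted by (simp add: sorted_wrt_rev)
    have s2: "sorted (rev ?B)" using good_block_sorted[OF g j] by (simp add: sorted_wrt_rev)
    have "rev ?b = rev ?B"
      using properties_for_sort[OF m s1] sorted_sort_id[OF s2] by simp
    then show ?thesis by simp
  qed
  show ?thesis
  proof (rule nth_equalityI)
    show "length (word n d ?P) = length w" using word_len[OF W] lw by simp
  next
    fix i assume "i < length (word n d ?P)"
    then have i: "i < r * n" using word_len[OF W] by simp
    define j where "j = i div r"
    define t where "t = i mod r"
    have ijt: "i = r * j + t" unfolding j_def t_def by simp
    have t: "t < r" unfolding t_def using r by simp
    have jn: "j < n" using i ijt by (metis add_lessD1 mult_less_cancel1)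
    have "word n d ?P ! i = blk d (?P j) (?P (Suc j)) ! t" using word_nth[OF W jn t] ijt by simp
    also have "\<dots> = take r (drop (r * j) w) ! t" using blkeq[OF jn] by simp
    also have "\<dots> = w ! i"
    proof -
      have "r * j \<le> length w" using lw jn by simp
      then show ?thesis using t ijt by (simp add: nth_take nth_drop)
    qed
    finally show "word n d ?P ! i = w ! i" .
  qed
qed

lemma pos_first:
  assumes "k \<le> length as"
  shows "pos (as, bs) k c = int (count_list (take k as) c)"
  using assms unfolding pos_def by simp

lemma pos_second:
  assumes la: "length as = m" and lb: "length bs' = m" and t: "t \<le> m"
    and ce: "count_list as c = count_list bs' c"
  shows "pos (as, bs') (m + t) c = int (count_list (take (m - t) (rev bs')) c)"
proof -
  have "take (m - t) (rev bs') = rev (drop t bs')" using lb t by (simp add: take_rev)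
  then have "count_list (take (m - t) (rev bs')) c = count_list (drop t bs') c" by simp
  moreover have "count_list bs' c = count_list (take t bs') c + count_list (drop t bs') c"
    by (metis append_take_drop_id count_list_append)
  moreover have "pos (as, bs') (m + t) c = int (count_list as c) - int (count_list (take t bs') c)"
    unfolding pos_def using la by simp
  ultimately show ?thesis using ce by simp
qed

lemma weyl_iff: "x \<in> weyl_chamber d \<longleftrightarrow> (\<forall>c. 1 \<le> c \<and> c < d \<longrightarrow> x (Suc c) \<le> x c)"
  unfolding weyl_chamber_def by simp

lemma lattice_min:
  "lattice d w \<longleftrightarrow> (\<forall>k\<le>length w. \<forall>c. 1 \<le> c \<and> c < d \<longrightarrow> count_list (take k w) (Suc c) \<le> count_list (take k w) c)"
  unfolding lattice_def
proof (intro iffI allI impI)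
  fix k c assume a: "\<forall>k\<le>length w. \<forall>c. 1 \<le> c \<and> c < d \<longrightarrow> count_list (take k w) (Suc c) \<le> count_list (take k w) c"
    and c: "1 \<le> c \<and> c < d"
  have "take k w = take (min k (length w)) w" by (simp add: min_def)
  then show "count_list (take k w) (Suc c) \<le> count_list (take k w) c" using a c
    by (metis min.cobounded2)
qed auto

lemma stays_iff:
  assumes la: "length as = m" and lb: "length bs' = m"
    and ce: "\<forall>c. count_list as c = count_list bs' c"
  shows "stays_in (as, bs') (weyl_chamber d) \<longleftrightarrow> lattice d as \<and> lattice d (rev bs')"
proof
  assume s: "stays_in (as, bs') (weyl_chamber d)"
  have s': "\<forall>k\<le>m + m. \<forall>c. 1 \<le> c \<and> c < d \<longrightarrow> pos (as, bs') k (Suc c) \<le> pos (as, bs') k c"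
    using s la lb unfolding stays_in_def weyl_iff by simp
  have "lattice d as" unfolding lattice_min
  proof (intro allI impI)
    fix k c assume k: "k \<le> length as" and c: "1 \<le> c \<and> c < d"
    have "pos (as, bs') k (Suc c) \<le> pos (as, bs') k c" using s' k la c by simp
    then show "count_list (take k as) (Suc c) \<le> count_list (take k as) c" using pos_first[OF k] by simp
  qed
  moreover have "lattice d (rev bs')" unfolding lattice_min
  proof (intro allI impI)
    fix k c assume k: "k \<le> length (rev bs')" and c: "1 \<le> c \<and> c < d"
    have km: "m - k \<le> m" "m - (m - k) = k" using k lb by auto
    have "pos (as, bs') (m + (m - k)) (Suc c) \<le> pos (as, bs') (m + (m - k)) c" using s' km c by simp
    then show "count_list (take k (rev bs')) (Suc c) \<le> count_list (take k (rev bs')) c"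
      using pos_second[OF la lb km(1)] ce km(2) by simp
  qed
  ultimately show "lattice d as \<and> lattice d (rev bs')" ..
next
  assume l: "lattice d as \<and> lattice d (rev bs')"
  show "stays_in (as, bs') (weyl_chamber d)"
    unfolding stays_in_def weyl_iff
  proof (intro allI impI)
    fix k c assume k: "k \<le> length (fst (as, bs')) + length (snd (as, bs'))" and c: "1 \<le> c \<and> c < d"
    show "pos (as, bs') k (Suc c) \<le> pos (as, bs') k c"
    proof (cases "k \<le> m")
      case True
      then show ?thesis using pos_first[of k as bs'] la l c unfolding lattice_def by simp
    next
      case False
      define t where "t = k - m"
      have kt: "k = m + t" "t \<le> m" using False k la lb unfolding t_def by auto
      show ?thesis using pos_second[OF la lb kt(2)] ce kt(1) l c unfolding lattice_def by simp
    qed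
  qed
qed

lemma config_part:
  assumes u: "u \<in> {1..n}" and v: "v \<in> {1..n}"
  shows "{p \<in> assoc_config n G. fst (fst p) = u \<and> fst (snd p) = v} =
     (\<lambda>s. ((u, (\<Sum>v'\<in>{v<..n}. G u v') + s), (v, (\<Sum>u'\<in>{u<..n}. G u' v) + G u v - s + 1))) ` {1..G u v}"
proof (intro equalityI subsetI)
  fix p assume pa: "p \<in> {p \<in> assoc_config n G. fst (fst p) = u \<and> fst (snd p) = v}"
  then have "p \<in> assoc_config n G" by simp
  then obtain u1 v1 s where p: "p = ((u1, (\<Sum>v'\<in>{v1<..n}. G u1 v') + s), (v1, (\<Sum>u'\<in>{u1<..n}. G u' v1) + G u1 v1 - s + 1))"
    and s: "1 \<le> s" "s \<le> G u1 v1"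
    unfolding assoc_config_def mem_Collect_eq by blast
  have uv: "u1 = u" "v1 = v" using pa p by auto
  show "p \<in> (\<lambda>s. ((u, (\<Sum>v'\<in>{v<..n}. G u v') + s), (v, (\<Sum>u'\<in>{u<..n}. G u' v) + G u v - s + 1))) ` {1..G u v}"
    using p s uv by (intro image_eqI[of _ _ s]) auto
next
  fix p assume "p \<in> (\<lambda>s. ((u, (\<Sum>v'\<in>{v<..n}. G u v') + s), (v, (\<Sum>u'\<in>{u<..n}. G u' v) + G u v - s + 1))) ` {1..G u v}"
  then obtain s where s: "s \<in> {1..G u v}"
    and p: "p = ((u, (\<Sum>v'\<in>{v<..n}. G u v') + s), (v, (\<Sum>u'\<in>{u<..n}. G u' v) + G u v - s + 1))"
    by (elim imageE) simp
  have "p \<in> assoc_config n G" unfolding assoc_config_def using u v s p by auto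
  then show "p \<in> {p \<in> assoc_config n G. fst (fst p) = u \<and> fst (snd p) = v}" using p by simp
qed

lemma config_count:
  assumes u: "u \<in> {1..n}" and v: "v \<in> {1..n}"
  shows "card {p \<in> assoc_config n G. fst (fst p) = u \<and> fst (snd p) = v} = G u v"
proof -
  have "inj_on (\<lambda>s. ((u, (\<Sum>v'\<in>{v<..n}. G u v') + s), (v, (\<Sum>u'\<in>{u<..n}. G u' v) + G u v - s + 1))) {1..G u v}"
    by (rule inj_onI) simp
  then show ?thesis unfolding config_part[OF u v] by (simp add: card_image)
qed

lemma mg_zero: "G \<in> multigraphs n r d \<Longrightarrow> u \<notin> {1..n} \<or> v \<notin> {1..n} \<Longrightarrow> G u v = 0"
  unfolding multigraphs_def regular_multigraph_def mem_Collect_eq by blast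

lemma config_inj: "inj_on (assoc_config n) (multigraphs n r d)"
proof (rule inj_onI)
  fix G G' assume G: "G \<in> multigraphs n r d" and G': "G' \<in> multigraphs n r d"
    and e: "assoc_config n G = assoc_config n G'"
  show "G = G'"
  proof (intro ext)
    fix u v
    show "G u v = G' u v"
    proof (cases "u \<in> {1..n} \<and> v \<in> {1..n}")
      case True
      then show ?thesis using config_count[of u n v G] config_count[of u n v G'] e by simp
    next
      case False then show ?thesis using mg_zero[OF G] mg_zero[OF G'] by simp
    qed
  qed
qed

lemma gr_0j: "gr K G i 0 = (\<lambda>_. 0)" by (cases i) auto

lemma rect_Suc_i: "rect G (Suc i) j = rect G i j + (\<Sum>v\<in>{1..j}. G (Suc i) v)"
  unfolding rect_def by simp

lemma rect_Suc_j: "rect G i (Suc j) = rect G i j + (\<Sum>u\<in>{1..i}. G u (Suc j))"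
  unfolding rect_def by (simp add: sum.distrib)

lemma rect_cols:
  assumes G: "regular_multigraph n r G" and j: "j \<le> n" shows "rect G n j = r * j"
  using j
proof (induction j)
  case 0 then show ?case by (simp add: rect_0)
next
  case (Suc j)
  have "(\<Sum>u\<in>{1..n}. G u (Suc j)) = r" using G Suc.prems unfolding regular_multigraph_def by simp
  then show ?case using Suc rect_Suc_j[of G n j] by simp
qed

lemma rect_rows:
  assumes G: "regular_multigraph n r G" and i: "i \<le> n" shows "rect G i n = r * i"
  using i
proof (induction i)
  case 0 then show ?case by (simp add: rect_0)
next
  case (Suc i)
  have "(\<Sum>v\<in>{1..n}. G (Suc i) v) = r" using G Suc.prems unfolding regular_multigraph_def by simp
  then show ?case using Suc rect_Suc_i[of G i n] by simp
qed

lemma mg_wchain: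
  assumes G: "G \<in> multigraphs n r d" and K: "K = n + d + 1"
  shows "wchain n r d K (\<lambda>j. gr K G n j)" "wchain n r d K (\<lambda>i. gr K G i n)"
proof -
  have reg: "regular_multigraph n r G" and Ld: "L G \<le> d" using G unfolding multigraphs_def by auto
  have nK: "n < K" using K by simp
  have DP: "DP G n n \<le> d" using L_eq_DP[OF reg] Ld by simp
  have Zn: "gr K G n n k = 0" if "d \<le> k" for k
    using conjunct1[OF growth[OF nK, of G n]] DP that unfolding Z_def by simp
  have hP: "hstrip (gr K G n j) (gr K G n (Suc j))" for j using growth[OF nK, of G j] by simp
  have hQ: "hstrip (gr K G i n) (gr K G (Suc i) n)" if "i < n" for i using growth_v[of i K G n] that nK by simp
  have pP: "pchain n d (\<lambda>j. gr K G n j)" unfolding pchain_def using hP Zn gr_0j by auto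
  have pQ: "pchain n d (\<lambda>i. gr K G i n)" unfolding pchain_def using hQ Zn by auto
  have sP: "psize K (gr K G n j) = r * j" if "j \<le> n" for j
    using conjunct1[OF conjunct2[OF growth[OF nK, of G j]]] rect_cols[OF reg that] by simp
  have sQ: "psize K (gr K G i n) = r * i" if "i \<le> n" for i
  proof -
    have "i < K" using that nK by simp
    then show ?thesis using conjunct1[OF conjunct2[OF growth[of i K G n]]] rect_rows[OF reg that] by simp
  qed
  have zP: "gr K G n j k = 0" if "j \<le> n" "d \<le> k" for j k
    using chain_mono[OF pP that(1), of k] Zn[OF that(2)] by simp
  have zQ: "gr K G i n k = 0" if "i \<le> n" "d \<le> k" for i k
    using chain_mono[OF pQ that(1), of k] Zn[OF that(2)] by simp
  have dK: "d \<le> K" using K by simp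
  show "wchain n r d K (\<lambda>j. gr K G n j)" unfolding wchain_def using pP zP sP dK by auto
  show "wchain n r d K (\<lambda>i. gr K G i n)" unfolding wchain_def using pQ zQ sQ dK by auto
qed

definition TT :: "nat \<Rightarrow> nat \<Rightarrow> nat \<Rightarrow> (nat list \<times> nat list) set" where
  "TT n r d = {w \<in> walks_tilde n r d. stays_in w (weyl_chamber d)}"

lemma count_out: "set w \<subseteq> {1..d} \<Longrightarrow> c \<notin> {1..d} \<Longrightarrow> count_list w c = 0"
  by (meson count_notin subsetD)

lemma wt_iff: "(as, bs') \<in> walks_tilde n r d \<longleftrightarrow> (as, rev bs') \<in> walks_prime n r d"
proof
  assume "(as, bs') \<in> walks_tilde n r d"
  then obtain x where x: "x \<in> walks_prime n r d" "(as, bs') = (\<lambda>(as, bs). (as, rev bs)) x"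
    unfolding walks_tilde_def by (elim imageE) simp
  obtain a b where ab: "x = (a, b)" by (cases x)
  then have "as = a" "bs' = rev b" using x(2) by auto
  then show "(as, rev bs') \<in> walks_prime n r d" using x(1) ab by simp
next
  assume a: "(as, rev bs') \<in> walks_prime n r d"
  have "(as, bs') = (\<lambda>(as, bs). (as, rev bs)) (as, rev bs')" by simp
  then show "(as, bs') \<in> walks_tilde n r d" unfolding walks_tilde_def using a by (rule image_eqI)
qed

lemma ws_iff: "(as, bs) \<in> walks_star d m \<longleftrightarrow> length as = m \<and> length bs = m \<and> set as \<subseteq> {1..d} \<and>
   set bs \<subseteq> {1..d} \<and> (\<forall>c\<in>{1..d}. pos (as, bs) (2 * m) c = 0)"
  unfolding walks_star_def by simp

lemma wp_iff: "(as, bs) \<in> walks_prime n r d \<longleftrightarrow> (as, bs) \<in> walks_star d (r * n) \<and> blockord n r as \<and> blockord n r bs"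
proof -
  have "(as, bs) \<in> walks_prime n r d \<longleftrightarrow> (as, bs) \<in> walks_star d (r * n) \<and>
       (\<forall>i\<in>{1..n}. \<forall>s. 1 \<le> s \<and> s < r \<longrightarrow>
          as ! (r * (i - 1) + s - 1) \<ge> as ! (r * (i - 1) + s) \<and>
          bs ! (r * (i - 1) + s - 1) \<ge> bs ! (r * (i - 1) + s))"
    unfolding walks_prime_def by simp
  also have "\<dots> \<longleftrightarrow> (as, bs) \<in> walks_star d (r * n) \<and> blockord n r as \<and> blockord n r bs"
    unfolding blockord_def by blast
  finally show ?thesis .
qed

lemma T_char:
  "(as, bs') \<in> TT n r d \<longleftrightarrow> good n r d as \<and> good n r d (rev bs') \<and> (\<forall>c. count_list as c = count_list (rev bs') c)"
proof -
  note wt = wt_iff[of as bs' n r d]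
  have pos2: "pos (as, bs) (2 * (r * n)) c = int (count_list as c) - int (count_list bs c)"
    if "length as = r * n" "length bs = r * n" for bs c
    using that unfolding pos_def by simp
  show ?thesis
  proof
    assume a: "(as, bs') \<in> TT n r d"
    then have wp: "(as, rev bs') \<in> walks_prime n r d" and st: "stays_in (as, bs') (weyl_chamber d)"
      unfolding TT_def using wt by auto
    have l: "length as = r * n" "length (rev bs') = r * n" "set as \<subseteq> {1..d}" "set (rev bs') \<subseteq> {1..d}"
      and cz: "\<forall>c\<in>{1..d}. pos (as, rev bs') (2 * (r * n)) c = 0"
      using wp unfolding wp_iff ws_iff by auto
    have bo: "blockord n r as" "blockord n r (rev bs')"
      using wp unfolding wp_iff by auto
    have ce: "\<forall>c. count_list as c = count_list (rev bs') c"
    proof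
      fix c show "count_list as c = count_list (rev bs') c"
      proof (cases "c \<in> {1..d}")
        case True
        then have "pos (as, rev bs') (2 * (r * n)) c = 0" using cz by blast
        then show ?thesis using pos2[OF l(1,2)] by simp
      next
        case False then show ?thesis using count_out[OF l(3) False] count_out[OF l(4) False] by simp
      qed
    qed
    have "lattice d as \<and> lattice d (rev bs')"
      using stays_iff[of as "r * n" bs' d] st l ce by simp
    then show "good n r d as \<and> good n r d (rev bs') \<and> (\<forall>c. count_list as c = count_list (rev bs') c)"
      unfolding good_def using l bo ce by simp
  next
    assume a: "good n r d as \<and> good n r d (rev bs') \<and> (\<forall>c. count_list as c = count_list (rev bs') c)"
    then have l: "length as = r * n" "length (rev bs') = r * n" "set as \<subseteq> {1..d}" "set (rev bs') \<subseteq> {1..d}"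
      and bo: "blockord n r as" "blockord n r (rev bs')" and lat: "lattice d as" "lattice d (rev bs')"
      and ce: "\<forall>c. count_list as c = count_list (rev bs') c"
      unfolding good_def by auto
    have "(as, rev bs') \<in> walks_star d (r * n)"
      unfolding ws_iff using l ce pos2[OF l(1,2)] by simp
    then have wp: "(as, rev bs') \<in> walks_prime n r d"
      unfolding wp_iff using bo by simp
    have st: "stays_in (as, bs') (weyl_chamber d)"
      using stays_iff[of as "r * n" bs' d] l ce lat by simp
    show "(as, bs') \<in> TT n r d" unfolding TT_def using wp st wt by simp
  qed
qed

definition hmap :: "nat \<Rightarrow> nat \<Rightarrow> (nat \<Rightarrow> nat \<Rightarrow> nat) \<Rightarrow> nat list \<times> nat list" where
  "hmap n d G = (word n d (\<lambda>j. gr (n + d + 1) G n j), rev (word n d (\<lambda>i. gr (n + d + 1) G i n)))"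

lemma word_count_all:
  assumes W: "wchain n r d K P"
  shows "count_list (word n d P) c = (if 1 \<le> c \<and> c \<le> d then P n (c - 1) else 0)"
  using word_count_take[OF W order_refl, of c] word_len[OF W] by simp

lemma hmap_in:
  assumes G: "G \<in> multigraphs n r d" and r: "1 \<le> r"
  shows "hmap n d G \<in> TT n r d"
proof -
  define K where "K = n + d + 1"
  note W = mg_wchain[OF G K_def]
  have g1: "good n r d (word n d (\<lambda>j. gr K G n j))"
    unfolding good_def using word_len[OF W(1)] word_set word_blockord[OF W(1)] word_lattice[OF W(1) r] by simp
  have g2: "good n r d (word n d (\<lambda>i. gr K G i n))"
    unfolding good_def using word_len[OF W(2)] word_set word_blockord[OF W(2)] word_lattice[OF W(2) r] by simp
  have ce: "\<forall>c. count_list (word n d (\<lambda>j. gr K G n j)) c = count_list (word n d (\<lambda>i. gr K G i n)) c"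
    using word_count_all[OF W(1)] word_count_all[OF W(2)] by simp
  show ?thesis unfolding hmap_def K_def[symmetric] T_char using g1 g2 ce by simp
qed

lemma hmap_inj:
  assumes r: "1 \<le> r"
  shows "inj_on (hmap n d) (multigraphs n r d)"
proof (rule inj_onI)
  fix G G' assume G: "G \<in> multigraphs n r d" and G': "G' \<in> multigraphs n r d" and e: "hmap n d G = hmap n d G'"
  define K where "K = n + d + 1"
  note W = mg_wchain[OF G K_def] and W' = mg_wchain[OF G' K_def]
  have e1: "word n d (\<lambda>j. gr K G n j) = word n d (\<lambda>j. gr K G' n j)"
    and e2: "word n d (\<lambda>i. gr K G i n) = word n d (\<lambda>i. gr K G' i n)"
    using e unfolding hmap_def K_def by auto
  have top: "\<forall>j\<le>n. gr K G n j = gr K G' n j"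
  proof (intro allI impI ext)
    fix j k assume j: "j \<le> n"
    show "gr K G n j k = gr K G' n j k"
    proof (cases "k < d")
      case True
      then show ?thesis using word_count_take[OF W(1) j, of "Suc k"] word_count_take[OF W'(1) j, of "Suc k"] e1
        by simp
    next
      case False then show ?thesis using W(1) W'(1) j unfolding wchain_def by simp
    qed
  qed
  have right: "\<forall>i\<le>n. gr K G i n = gr K G' i n"
  proof (intro allI impI ext)
    fix i k assume i: "i \<le> n"
    show "gr K G i n k = gr K G' i n k"
    proof (cases "k < d")
      case True
      then show ?thesis using word_count_take[OF W(2) i, of "Suc k"] word_count_take[OF W'(2) i, of "Suc k"] e2
        by simp
    next
      case False then show ?thesis using W(2) W'(2) i unfolding wchain_def by simp
    qed
  qed
  have nK: "n < K" unfolding K_def by simp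
  note gi = gr_inj[OF nK top right]
  show "G = G'"
  proof (intro ext)
    fix u v
    show "G u v = G' u v"
    proof (cases "u \<in> {1..n} \<and> v \<in> {1..n}")
      case True
      define i where "i = u - 1"
      define j where "j = v - 1"
      have ij: "u = Suc i" "v = Suc j" "i < n" "j < n" using True unfolding i_def j_def by auto
      then show ?thesis using gi by (simp del: gr.simps)
    next
      case False then show ?thesis using mg_zero[OF G] mg_zero[OF G'] by simp
    qed
  qed
qed

lemma hmap_surj:
  assumes r: "1 \<le> r" and n: "1 \<le> n" and w: "(as, bs') \<in> TT n r d"
  shows "\<exists>G\<in>multigraphs n r d. hmap n d G = (as, bs')"
proof -
  define K where "K = n + d + 1"
  have dK: "d \<le> K" "d < K" and nK: "n < K" unfolding K_def by auto
  have ga: "good n r d as" and gb: "good n r d (rev bs')"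
    and ce: "\<forall>c. count_list as c = count_list (rev bs') c" using w unfolding T_char by auto
  define P where "P = Pw r d as"
  define Q where "Q = Pw r d (rev bs')"
  have WP: "wchain n r d K P" unfolding P_def using Pw_wchain[OF ga r dK(1)] .
  have WQ: "wchain n r d K Q" unfolding Q_def using Pw_wchain[OF gb r dK(1)] .
  have la: "length as = r * n" and lb: "length (rev bs') = r * n" using ga gb unfolding good_def by auto
  have PQ: "P n = Q n" unfolding P_def Q_def Pw_def using la lb ce by auto
  have pP: "pchain n d P" and pQ: "pchain n d Q" using WP WQ unfolding wchain_def by auto
  define G where "G = bG n P Q K"
  have E: "gr K G i j = bg n P Q (n - i) (n - j)" if "i \<le> n" "j \<le> n" for i j
    unfolding G_def using E4[OF pP pQ PQ n dK(2) that] .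
  have top: "gr K G n j = P j" if "j \<le> n" for j using E[of n j] that by simp
  have right: "gr K G i n = Q i" if "i \<le> n" for i
  proof (cases "i = n")
    case True then show ?thesis using E[of n n] PQ by simp
  next
    case False
    define a where "a = n - i - 1"
    have a: "n - i = Suc a" using False that unfolding a_def by simp
    have "n - Suc a = i" using a that by simp
    have "gr K G i n = bg n P Q (Suc a) 0" using E[of i n] that a by simp
    then show ?thesis using \<open>n - Suc a = i\<close> by simp
  qed
  have zero: "G u v = 0" if "u \<notin> {1..n} \<or> v \<notin> {1..n}" for u v
    using that unfolding G_def bG_def by auto
  have szP: "rect G n j = r * j" if "j \<le> n" for j
    using conjunct1[OF conjunct2[OF growth[OF nK, of G j]]] top[OF that] WP that unfolding wchain_def by simp
  have szQ: "rect G i n = r * i" if "i \<le> n" for i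
  proof -
    have "i < K" using that nK by simp
    then show ?thesis using conjunct1[OF conjunct2[OF growth[of i K G n]]] right[OF that] WQ that
      unfolding wchain_def by simp
  qed
  have cols: "(\<Sum>u\<in>{1..n}. G u v) = r" if "v \<in> {1..n}" for v
  proof -
    define j where "j = v - 1"
    have j: "v = Suc j" "j < n" using that unfolding j_def by auto
    have "rect G n (Suc j) = rect G n j + (\<Sum>u\<in>{1..n}. G u (Suc j))" by (rule rect_Suc_j)
    then show ?thesis using szP[of j] szP[of "Suc j"] j by simp
  qed
  have rows: "(\<Sum>v\<in>{1..n}. G u v) = r" if "u \<in> {1..n}" for u
  proof -
    define i where "i = u - 1"
    have i: "u = Suc i" "i < n" using that unfolding i_def by auto
    have "rect G (Suc i) n = rect G i n + (\<Sum>v\<in>{1..n}. G (Suc i) v)" by (rule rect_Suc_i)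
    then show ?thesis using szQ[of i] szQ[of "Suc i"] i by simp
  qed
  have reg: "regular_multigraph n r G" unfolding regular_multigraph_def using zero rows cols by blast
  have "DP G n n \<le> d"
  proof -
    have "gr K G n n d = 0" using top[of n] WP unfolding wchain_def by simp
    then show ?thesis using conjunct1[OF growth[OF nK, of G n]] unfolding Z_def by simp
  qed
  then have "L G \<le> d" using L_eq_DP[OF reg] by simp
  then have Gm: "G \<in> multigraphs n r d" unfolding multigraphs_def using reg by simp
  have wP: "word n d (\<lambda>j. gr K G n j) = as"
  proof -
    have "word n d (\<lambda>j. gr K G n j) = word n d P"
      unfolding word_def using top by (intro arg_cong[where f=concat] map_cong) auto
    then show ?thesis using Pw_word[OF ga r dK(1)] unfolding P_def by simp
  qed
  have wQ: "word n d (\<lambda>i. gr K G i n) = rev bs'"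
  proof -
    have "word n d (\<lambda>i. gr K G i n) = word n d Q"
      unfolding word_def using right by (intro arg_cong[where f=concat] map_cong) auto
    then show ?thesis using Pw_word[OF gb r dK(1)] unfolding Q_def by simp
  qed
  have "hmap n d G = (as, bs')" unfolding hmap_def K_def[symmetric] using wP wQ by simp
  then show ?thesis using Gm by blast
qed

theorem theorem6:
  fixes n r d :: nat
  assumes "n \<ge> 1" and "r \<ge> 1" and "d \<ge> 1"
  shows "\<exists>f. bij_betw f (configs n r d)
                {w \<in> walks_tilde n r d. stays_in w (weyl_chamber d)}"
proof -
  have hb: "bij_betw (hmap n d) (multigraphs n r d) (TT n r d)"
    unfolding bij_betw_def
  proof
    show "inj_on (hmap n d) (multigraphs n r d)" using hmap_inj assms(2) .
    show "hmap n d ` multigraphs n r d = TT n r d"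
    proof (intro equalityI subsetI)
      fix x assume "x \<in> hmap n d ` multigraphs n r d"
      then show "x \<in> TT n r d" using hmap_in assms(2) by blast
    next
      fix x assume x: "x \<in> TT n r d"
      obtain as bs' where "x = (as, bs')" by (cases x)
      then show "x \<in> hmap n d ` multigraphs n r d" using hmap_surj[OF assms(2) assms(1)] x by force
    qed
  qed
  have cb: "bij_betw (assoc_config n) (multigraphs n r d) (configs n r d)"
    unfolding configs_def using config_inj by (rule inj_on_imp_bij_betw)
  have "bij_betw (hmap n d \<circ> the_inv_into (multigraphs n r d) (assoc_config n)) (configs n r d) (TT n r d)"
    using bij_betw_trans[OF bij_betw_the_inv_into[OF cb] hb] .
  then show ?thesis unfolding TT_def by blast
qed

end
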